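(* Let $m\ge4$. If $\mathcal W_1$ is an $m\times m$ quadrilateral labyrinth set in $Q$, then for every $n\ge1$ the set $\mathcal W_n$ of white quadrilaterals of order $n$ is an $m^n\times m^n$ quadrilateral labyrinth set. That is, $\mathcal W_n\subseteq\mathcal S_{m^n}$ and $\mathcal W_n$ satisfies the tree property, the exit property and the corner property with $m$ replaced by $m^n$.
   Context: Let $Q$ be a convex quadrilateral in $\mathbb{R}^2$. Divide $Q$ into two triangles by its shorter diagonal (either diagonal if they have equal length). Label the vertices $Q_1,Q_2,Q_3,Q_4$ anticlockwise, starting at an endpoint of that diagonal, so that the diagonal is $Q_1Q_3$. Let $\Delta_1$ be the closed triangle $Q_1Q_2Q_3$ and $\Delta_2$ the closed triangle $Q_3Q_4Q_1$. Every $x\in Q$ has a unique representation $x=\sum_{i=1}^4\alpha_iQ_i$, defined as follows. If $x\in\Delta_1$, then $\alpha_4=0$ and $(\alpha_1,\alpha_2,\alpha_3)$ are the barycentric coordinates of $x$ in $\Delta_1$. If $x\in\Delta_2$, then $\alpha_2=0$ and $(\alpha_1,\alpha_3,\alpha_4)$ are the barycentric coordinates of $x$ in $\Delta_2$. For an ordered quadruple $V=(V_1,\dots,V_4)$ define $P_V:Q\to\mathbb{R}^2$ by $P_V(x)=\sum_i\alpha_iV_i$. For an integer $m\ge2$, define the following index sets: - $A_1=\{(k_1,k_2,k_3,0)\in\mathbb{Z}_{\ge0}^4:k_1+k_2+k_3=m-1,\ k_2\ne0\}$, - $A_2=\{(k_1,0,k_3,k_4)\in\mathbb{Z}_{\ge0}^4:k_1+k_3+k_4=m-1,\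 k_4\ne0\}$, - $A_3=\{(k_1,0,k_3,0)\in\mathbb{Z}_{\ge0}^4:k_1+k_3=m-1\}$, - $A=A_1\cup A_2\cup A_3$. For $k\in A$, let $S_m(k)$ be the quadrilateral with ordered vertices $R_1R_2R_3R_4$ given below. - If $k\in A_1$: $R_1=\frac{(k_1+1)Q_1+k_2Q_2+k_3Q_3}{m}$, $R_2=\frac{k_1Q_1+(k_2+1)Q_2+k_3Q_3}{m}$, $R_3=\frac{k_1Q_1+k_2Q_2+(k_3+1)Q_3}{m}$, $R_4=\frac{(k_1+1)Q_1+(k_2-1)Q_2+(k_3+1)Q_3}{m}$. - If $k\in A_2$: $R_1=\frac{(k_1+1)Q_1+k_3Q_3+k_4Q_4}{m}$, $R_2=\frac{(k_1+1)Q_1+(k_3+1)Q_3+(k_4-1)Q_4}{m}$, $R_3=\frac{k_1Q_1+(k_3+1)Q_3+k_4Q_4}{m}$, $R_4=\frac{k_1Q_1+k_3Q_3+(k_4+1)Q_4}{m}$. - If $k\in A_3$: $R_1=\frac{(k_1+1)Q_1+k_3Q_3}{m}$, $R_2=\frac{k_1Q_1+Q_2+k_3Q_3}{m}$, $R_3=\frac{k_1Q_1+(k_3+1)Q_3}{m}$, $R_4=\frac{k_1Q_1+k_3Q_3+Q_4}{m}$. Let $\mathcal S_m=\{S_m(k):k\in A\}$. For $\mathcal W\subseteq\mathcal S_m$, the graph $\mathcal G(\mathcal W)$ has vertex set $\mathcal W$, with two elements adjacent iff they have a common side. An $m\times m$ quadrilateral labyrinth set ($m\ge4$) is a set $\mathcal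 W_1\subseteq\mathcal S_m$ satisfying three properties. (1) Tree property: $\mathcal G(\mathcal W_1)$ is a tree. (2) Exit property: there is exactly one $(k_1,k_2,0,0)\in A$ with $S_m(k_1,k_2,0,0)\in\mathcal W_1$ and $S_m(0,0,k_2,k_1)\in\mathcal W_1$. There is also exactly one $(k_1,0,0,k_4)\in A$ with $S_m(k_1,0,0,k_4)\in\mathcal W_1$ and $S_m(0,k_1,k_4,0)\in\mathcal W_1$. (3) Corner property: $\mathcal W_1$ contains at most one element of $\{S_m(m-1,0,0,0),S_m(0,0,m-1,0)\}$ and at most one element of $\{S_m(0,m-1,0,0),S_m(0,0,0,m-1)\}$. Given $\mathcal W_1\subseteq\mathcal S_m$ (the white quadrilaterals of order 1), define recursively for $n\ge2$: $\mathcal W_n=\{P_{W}(W'):W'\in\mathcal W_1,\ W\in\mathcal W_{n-1}\}$. Here $P_W(W')$ is the quadrilateral whose ordered vertices are the images under $P_W$ of the ordered vertices of $W'$. Each $W\in\mathcal W_{n-1}$ is used with its ordered vertices. *)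

theory Defs
  imports "HOL-Analysis.Analysis"
begin

type_synonym pt = "real^2"
type_synonym quad = "pt \<times> pt \<times> pt \<times> pt"

definition cross2 :: "pt \<Rightarrow> pt \<Rightarrow> real" where
  "cross2 u v = u$1 * v$2 - u$2 * v$1"

definition convex_quad_ccw :: "quad \<Rightarrow> bool" where
  "convex_quad_ccw Qv = (case Qv of (Q1,Q2,Q3,Q4) \<Rightarrow>
     cross2 (Q2 - Q1) (Q3 - Q2) > 0 \<and> cross2 (Q3 - Q2) (Q4 - Q3) > 0 \<and>
     cross2 (Q4 - Q3) (Q1 - Q4) > 0 \<and> cross2 (Q1 - Q4) (Q2 - Q1) > 0)"

definition quad_region :: "quad \<Rightarrow> pt set" where
  "quad_region Qv = (case Qv of (Q1,Q2,Q3,Q4) \<Rightarrow> convex hull {Q1,Q2,Q3,Q4})"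

definition comb :: "quad \<Rightarrow> real \<times> real \<times> real \<times> real \<Rightarrow> pt" where
  "comb V a = (case V of (V1,V2,V3,V4) \<Rightarrow> case a of (a1,a2,a3,a4) \<Rightarrow>
     a1 *\<^sub>R V1 + a2 *\<^sub>R V2 + a3 *\<^sub>R V3 + a4 *\<^sub>R V4)"

definition quad_coords :: "quad \<Rightarrow> pt \<Rightarrow> real \<times> real \<times> real \<times> real" where
  "quad_coords Qv x = (case Qv of (Q1,Q2,Q3,Q4) \<Rightarrow>
     if x \<in> convex hull {Q1,Q2,Q3} then
       (THE a. case a of (a1,a2,a3,a4) \<Rightarrow> a4 = 0 \<and> a1 \<ge> 0 \<and> a2 \<ge> 0 \<and> a3 \<ge> 0 \<and>
           a1 + a2 + a3 = 1 \<and> x = comb Qv a)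
     else
       (THE a. case a of (a1,a2,a3,a4) \<Rightarrow> a2 = 0 \<and> a1 \<ge> 0 \<and> a3 \<ge> 0 \<and> a4 \<ge> 0 \<and>
           a1 + a3 + a4 = 1 \<and> x = comb Qv a))"

definition PV :: "quad \<Rightarrow> quad \<Rightarrow> pt \<Rightarrow> pt" where
  "PV Qv V x = comb V (quad_coords Qv x)"

definition quad_map :: "quad \<Rightarrow> quad \<Rightarrow> quad \<Rightarrow> quad" where
  "quad_map Qv W W' = (case W' of (R1,R2,R3,R4) \<Rightarrow>
     (PV Qv W R1, PV Qv W R2, PV Qv W R3, PV Qv W R4))"

type_synonym idx = "nat \<times> nat \<times> nat \<times> nat"

definition A1 :: "nat \<Rightarrow> idx set" where
  "A1 m = {(k1,k2,k3,k4). k4 = 0 \<and> k1 + k2 + k3 = m - 1 \<and> k2 \<noteq> 0}"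
definition A2 :: "nat \<Rightarrow> idx set" where
  "A2 m = {(k1,k2,k3,k4). k2 = 0 \<and> k1 + k3 + k4 = m - 1 \<and> k4 \<noteq> 0}"
definition A3 :: "nat \<Rightarrow> idx set" where
  "A3 m = {(k1,k2,k3,k4). k2 = 0 \<and> k4 = 0 \<and> k1 + k3 = m - 1}"
definition Aidx :: "nat \<Rightarrow> idx set" where
  "Aidx m = A1 m \<union> A2 m \<union> A3 m"

text \<open>The quadrilateral S_m(k) (meaningful for k in A).\<close>
definition Sq :: "quad \<Rightarrow> nat \<Rightarrow> idx \<Rightarrow> quad" where
  "Sq Qv m k = (case k of (k1,k2,k3,k4) \<Rightarrow>
     let r = real m; c1 = real k1; c2 = real k2; c3 = real k3; c4 = real k4 in
     if k \<in> A1 m then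
       (comb Qv ((c1+1)/r, c2/r, c3/r, 0),
        comb Qv (c1/r, (c2+1)/r, c3/r, 0),
        comb Qv (c1/r, c2/r, (c3+1)/r, 0),
        comb Qv ((c1+1)/r, (c2-1)/r, (c3+1)/r, 0))
     else if k \<in> A2 m then
       (comb Qv ((c1+1)/r, 0, c3/r, c4/r),
        comb Qv ((c1+1)/r, 0, (c3+1)/r, (c4-1)/r),
        comb Qv (c1/r, 0, (c3+1)/r, c4/r),
        comb Qv (c1/r, 0, c3/r, (c4+1)/r))
     else
       (comb Qv ((c1+1)/r, 0, c3/r, 0),
        comb Qv (c1/r, 1/r, c3/r, 0),
        comb Qv (c1/r, 0, (c3+1)/r, 0),
        comb Qv (c1/r, 0, c3/r, 1/r)))"

definition Sset :: "quad \<Rightarrow> nat \<Rightarrow> quad set" where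
  "Sset Qv m = Sq Qv m ` Aidx m"

definition sides :: "quad \<Rightarrow> pt set set" where
  "sides R = (case R of (R1,R2,R3,R4) \<Rightarrow>
     {closed_segment R1 R2, closed_segment R2 R3, closed_segment R3 R4, closed_segment R4 R1})"

definition adj :: "quad \<Rightarrow> quad \<Rightarrow> bool" where
  "adj U V = (U \<noteq> V \<and> sides U \<inter> sides V \<noteq> {})"

definition graph_connected :: "quad set \<Rightarrow> bool" where
  "graph_connected W = (\<forall>U\<in>W. \<forall>V\<in>W.
     (U, V) \<in> ({(X, Y). X \<in> W \<and> Y \<in> W \<and> adj X Y})\<^sup>*)"

definition has_cycle :: "quad set \<Rightarrow> bool" where
  "has_cycle W = (\<exists>cs. length cs \<ge> 3 \<and> distinct cs \<and> set cs \<subseteq> W \<and>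
     (\<forall>i < length cs - 1. adj (cs ! i) (cs ! Suc i)) \<and> adj (last cs) (hd cs))"

definition is_tree :: "quad set \<Rightarrow> bool" where
  "is_tree W = (finite W \<and> W \<noteq> {} \<and> graph_connected W \<and> \<not> has_cycle W)"

definition exit_property :: "quad \<Rightarrow> nat \<Rightarrow> quad set \<Rightarrow> bool" where
  "exit_property Qv m W =
    ((\<exists>!p. case p of (k1, k2) \<Rightarrow> (k1,k2,0,0) \<in> Aidx m \<and>
        Sq Qv m (k1,k2,0,0) \<in> W \<and> Sq Qv m (0,0,k2,k1) \<in> W) \<and>
     (\<exists>!p. case p of (k1, k4) \<Rightarrow> (k1,0,0,k4) \<in> Aidx m \<and>
        Sq Qv m (k1,0,0,k4) \<in> W \<and> Sq Qv m (0,k1,k4,0) \<in> W))"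

definition corner_property :: "quad \<Rightarrow> nat \<Rightarrow> quad set \<Rightarrow> bool" where
  "corner_property Qv m W =
    (\<not> (Sq Qv m (m-1,0,0,0) \<in> W \<and> Sq Qv m (0,0,m-1,0) \<in> W) \<and>
     \<not> (Sq Qv m (0,m-1,0,0) \<in> W \<and> Sq Qv m (0,0,0,m-1) \<in> W))"

definition labyrinth_set :: "quad \<Rightarrow> nat \<Rightarrow> quad set \<Rightarrow> bool" where
  "labyrinth_set Qv m W = (m \<ge> 4 \<and> W \<subseteq> Sset Qv m \<and> is_tree W \<and>
     exit_property Qv m W \<and> corner_property Qv m W)"

text \<open>white_aux Qv W1 j = W_(j+1).\<close>
primrec white_aux :: "quad \<Rightarrow> quad set \<Rightarrow> nat \<Rightarrow> quad set" where
  "white_aux Qv W1 0 = W1"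
| "white_aux Qv W1 (Suc j) = {quad_map Qv W W' | W W'. W' \<in> W1 \<and> W \<in> white_aux Qv W1 j}"

definition white :: "quad \<Rightarrow> quad set \<Rightarrow> nat \<Rightarrow> quad set" where
  "white Qv W1 n = white_aux Qv W1 (n - 1)"

end

theory Submission
  imports Defs
begin


definition cyc :: "('a \<Rightarrow> 'a \<Rightarrow> bool) \<Rightarrow> 'a set \<Rightarrow> bool" where
 "cyc R V = (\<exists>cs. length cs \<ge> 3 \<and> distinct cs \<and> set cs \<subseteq> V \<and> successively R cs \<and> R (last cs) (hd cs))"

lemma succ_distinct_strict:
  "distinct ws \<Longrightarrow> successively (\<lambda>x y. x = y \<or> P x y) ws \<Longrightarrow> successively P ws"
  by (induction "\<lambda>x y. x = y \<or> P x y" ws rule: successively.induct) auto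

lemma walk_cycle:
  assumes sym: "\<And>x y. R x y \<Longrightarrow> R y x" and Rab: "R a b" and ab: "a \<noteq> b"
  shows "ws \<noteq> [] \<Longrightarrow> hd ws = a \<Longrightarrow> last ws = b \<Longrightarrow> set ws \<subseteq> V \<Longrightarrow>
     successively (\<lambda>x y. x = y \<or> (R x y \<and> {x,y} \<noteq> {a,b})) ws \<Longrightarrow> cyc R V"
proof (induction ws rule: length_induct)
  case (1 ws)
  let ?P = "\<lambda>x y. x = y \<or> (R x y \<and> {x,y} \<noteq> {a,b})"
  show ?case
  proof (cases "distinct ws")
    case False
    then obtain xs ys zs y where ws: "ws = xs @ [y] @ ys @ [y] @ zs"
      using not_distinct_decomp by blast
    define ws' where "ws' = xs @ [y] @ zs"
    have len: "length ws' < length ws" unfolding ws ws'_def by simp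
    have "ws' \<noteq> []" unfolding ws'_def by simp
    moreover have "hd ws' = a" using 1(3) unfolding ws ws'_def by (cases xs) auto
    moreover have "last ws' = b" using 1(4) unfolding ws ws'_def by (cases zs) auto
    moreover have "set ws' \<subseteq> V" using 1(5) unfolding ws ws'_def by auto
    moreover have "successively ?P ws'"
      using 1(6) unfolding ws ws'_def
      by (auto simp: successively_append_iff successively_Cons split: if_splits)
    ultimately show ?thesis using 1(1) len by blast
  next
    case True
    have s: "successively (\<lambda>x y. R x y \<and> {x,y} \<noteq> {a,b}) ws"
      using succ_distinct_strict[OF True 1(6)] .
    have "length ws \<noteq> 1"
      using 1 ab by (cases ws) auto
    moreover have "length ws \<noteq> 2"
    proof
      assume "length ws = 2"
      then obtain x y where "ws = [x,y]" by (metis (no_types) One_nat_def Suc_1 length_0_conv length_Suc_conv)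
      then show False using s 1 by auto
    qed
    moreover have "length ws \<noteq> 0" using 1 by simp
    ultimately have "length ws \<ge> 3" by linarith
    moreover have "successively R ws" using successively_mono[OF s] by blast
    ultimately show ?thesis unfolding cyc_def using True 1 sym[OF Rab] by blast
  qed
qed


type_synonym cell = "nat \<times> nat"

definition gadj :: "cell \<Rightarrow> cell \<Rightarrow> bool" where
  "gadj p q = ((fst p = fst q \<and> (snd p = Suc (snd q) \<or> snd q = Suc (snd p))) \<or>
               (snd p = snd q \<and> (fst p = Suc (fst q) \<or> fst q = Suc (fst p))))"

definition grid :: "nat \<Rightarrow> cell set" where "grid M = {0..<M} \<times> {0..<M}"

definition conn :: "('a \<Rightarrow> 'a \<Rightarrow> bool) \<Rightarrow> 'a set \<Rightarrow> bool" where
  "conn R V = (\<forall>u\<in>V. \<forall>v\<in>V. (u, v) \<in> {(x,y). x \<in> V \<and> y \<in> V \<and> R x y}\<^sup>*)"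

definition ctree :: "cell set \<Rightarrow> bool" where
  "ctree C = (finite C \<and> C \<noteq> {} \<and> conn gadj C \<and> \<not> cyc gadj C)"

definition clab :: "nat \<Rightarrow> cell set \<Rightarrow> bool" where
  "clab M C = (4 \<le> M \<and> C \<subseteq> grid M \<and> ctree C \<and>
     (\<exists>!x. x < M \<and> (x,0) \<in> C \<and> (x,M-1) \<in> C) \<and>
     (\<exists>!y. y < M \<and> (0,y) \<in> C \<and> (M-1,y) \<in> C) \<and>
     \<not> ((0,0) \<in> C \<and> (M-1,M-1) \<in> C) \<and> \<not> ((M-1,0) \<in> C \<and> (0,M-1) \<in> C))"

definition emb :: "nat \<Rightarrow> cell \<Rightarrow> cell \<Rightarrow> cell" where
  "emb m d c = (m * fst d + fst c, m * snd d + snd c)"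

definition subst :: "nat \<Rightarrow> cell set \<Rightarrow> cell set \<Rightarrow> cell set" where
  "subst m D C = {emb m d c | d c. d \<in> D \<and> c \<in> C}"

lemma gadj_sym: "gadj p q \<Longrightarrow> gadj q p" unfolding gadj_def by auto
lemma gadj_irrefl: "gadj p q \<Longrightarrow> p \<noteq> q" unfolding gadj_def by auto

lemma L_eq:
  fixes m d d' c c' :: nat
  assumes "c < m" "c' < m"
  shows "m*d + c = m*d' + c' \<longleftrightarrow> d = d' \<and> c = c'"
proof
  assume h: "m*d + c = m*d' + c'"
  have "(m*d + c) div m = d" "(m*d+c) mod m = c" using assms by auto
  moreover have "(m*d' + c') div m = d'" "(m*d'+c') mod m = c'" using assms by auto
  ultimately show "d = d' \<and> c = c'" using h by metis
qed auto

lemma L_suc: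
  fixes m d d' c c' :: nat
  assumes "c < m" "c' < m"
  shows "m*d + c = Suc (m*d' + c') \<longleftrightarrow> (d = d' \<and> c = Suc c') \<or> (d = Suc d' \<and> c = 0 \<and> c' = m - 1)"
proof (cases "Suc c' < m")
  case True
  have "Suc (m*d' + c') = m*d' + Suc c'" by simp
  then show ?thesis using L_eq[OF assms(1) True, of d d'] True by auto
next
  case False
  then have c': "c' = m - 1" "m > 0" using assms by auto
  have "Suc (m*d' + c') = m * Suc d' + 0" using c' by (cases m) auto
  then show ?thesis using L_eq[OF assms(1), of 0 d "Suc d'"] c' assms by auto
qed


definition xadj :: "nat \<Rightarrow> cell \<Rightarrow> cell \<Rightarrow> cell \<Rightarrow> cell \<Rightarrow> bool" where
 "xadj m d c d' c' =
  ((snd d = snd d' \<and> snd c = snd c' \<and> ((fst d = Suc (fst d') \<and> fst c = 0 \<and> fst c' = m-1) \<or> (fst d' = Suc (fst d) \<and> fst c' = 0 \<and> fst c = m-1))) \<or>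
   (fst d = fst d' \<and> fst c = fst c' \<and> ((snd d = Suc (snd d') \<and> snd c = 0 \<and> snd c' = m-1) \<or> (snd d' = Suc (snd d) \<and> snd c' = 0 \<and> snd c = m-1))))"

lemma gadj_emb:
  assumes "c \<in> grid m" "c' \<in> grid m"
  shows "gadj (emb m d c) (emb m d' c') \<longleftrightarrow> (d = d' \<and> gadj c c') \<or> xadj m d c d' c'"
proof -
  obtain a b where c: "c = (a,b)" by force
  obtain a' b' where c': "c' = (a',b')" by force
  obtain x y where d: "d = (x,y)" by force
  obtain x' y' where d': "d' = (x',y')" by force
  have ab: "a < m" "b < m" "a' < m" "b' < m" using assms c c' by (auto simp: grid_def)
  show ?thesis unfolding c c' d d' emb_def gadj_def xadj_def
    using L_eq[OF ab(1) ab(3)] L_eq[OF ab(2) ab(4)]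
      L_suc[OF ab(1) ab(3)] L_suc[OF ab(3) ab(1)] L_suc[OF ab(2) ab(4)] L_suc[OF ab(4) ab(2)]
    by auto
qed

lemma emb_inj:
  assumes "c \<in> grid m" "c' \<in> grid m"
  shows "emb m d c = emb m d' c' \<longleftrightarrow> d = d' \<and> c = c'"
  using assms L_eq[of "fst c" m "fst c'" "fst d" "fst d'"] L_eq[of "snd c" m "snd c'" "snd d" "snd d'"]
  by (auto simp: emb_def grid_def prod_eq_iff)


lemma xadj_gadj: "xadj m d c d' c' \<Longrightarrow> gadj d d'"
  unfolding xadj_def gadj_def by auto

context
  fixes m M :: nat and C D :: "cell set"
  assumes C: "clab m C" and D: "clab M D"
begin

lemma m4: "4 \<le> m" using C by (simp add: clab_def)
lemma M4: "4 \<le> M" using D by (simp add: clab_def)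
lemma Cg: "C \<subseteq> grid m" using C by (simp add: clab_def)
lemma Dg: "D \<subseteq> grid M" using D by (simp add: clab_def)

lemma cross_exists:
  assumes "gadj d d'"
  shows "\<exists>c\<in>C. \<exists>c'\<in>C. xadj m d c d' c'"
proof -
  obtain x where x: "(x,0) \<in> C" "(x,m-1) \<in> C" using C unfolding clab_def by blast
  obtain y where y: "(0,y) \<in> C" "(m-1,y) \<in> C" using C unfolding clab_def by blast
  show ?thesis using assms unfolding gadj_def
  proof (elim disjE conjE)
    assume "fst d = fst d'" "snd d = Suc (snd d')"
    then show ?thesis using x by (intro bexI[of _ "(x,0)"] bexI[of _ "(x,m-1)"]) (auto simp: xadj_def)
  next
    assume "fst d = fst d'" "snd d' = Suc (snd d)"
    then show ?thesis using x by (intro bexI[of _ "(x,m-1)"] bexI[of _ "(x,0)"]) (auto simp: xadj_def)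
  next
    assume "snd d = snd d'" "fst d = Suc (fst d')"
    then show ?thesis using y by (intro bexI[of _ "(0,y)"] bexI[of _ "(m-1,y)"]) (auto simp: xadj_def)
  next
    assume "snd d = snd d'" "fst d' = Suc (fst d)"
    then show ?thesis using y by (intro bexI[of _ "(m-1,y)"] bexI[of _ "(0,y)"]) (auto simp: xadj_def)
  qed
qed

lemma cross_unique:
  assumes "xadj m d c1 d' c2" "xadj m d c1' d' c2'" "c1 \<in> C" "c2 \<in> C" "c1' \<in> C" "c2' \<in> C"
  shows "c1 = c1' \<and> c2 = c2'"
proof -
  have ux: "\<And>x x'. x < m \<Longrightarrow> (x,0) \<in> C \<Longrightarrow> (x,m-1) \<in> C \<Longrightarrow> x' < m \<Longrightarrow> (x',0) \<in> C \<Longrightarrow> (x',m-1) \<in> C \<Longrightarrow> x = x'"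
    using C unfolding clab_def by blast
  have uy: "\<And>x x'. x < m \<Longrightarrow> (0,x) \<in> C \<Longrightarrow> (m-1,x) \<in> C \<Longrightarrow> x' < m \<Longrightarrow> (0,x') \<in> C \<Longrightarrow> (m-1,x') \<in> C \<Longrightarrow> x = x'"
    using C unfolding clab_def by blast
  have g: "c1 \<in> grid m" "c2 \<in> grid m" "c1' \<in> grid m" "c2' \<in> grid m" using assms(3-6) Cg by auto
  obtain a1 b1 where e1: "c1 = (a1,b1)" by force
  obtain a2 b2 where e2: "c2 = (a2,b2)" by force
  obtain a3 b3 where e3: "c1' = (a3,b3)" by force
  obtain a4 b4 where e4: "c2' = (a4,b4)" by force
  show ?thesis using assms g ux[of a1 a3] ux[of a2 a4] ux[of a1 a4] ux[of a2 a3] uy[of b1 b3] uy[of b2 b4]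
    unfolding e1 e2 e3 e4 xadj_def grid_def by auto
qed

end


definition blk :: "nat \<Rightarrow> cell \<Rightarrow> cell" where "blk m e = (fst e div m, snd e div m)"
definition loc :: "nat \<Rightarrow> cell \<Rightarrow> cell" where "loc m e = (fst e mod m, snd e mod m)"

lemma blk_emb: "c \<in> grid m \<Longrightarrow> blk m (emb m d c) = d"
  by (auto simp: blk_def emb_def grid_def)
lemma loc_emb: "c \<in> grid m \<Longrightarrow> loc m (emb m d c) = c"
  by (auto simp: loc_def emb_def grid_def)

context
  fixes m M :: nat and C D :: "cell set"
  assumes C: "clab m C" and D: "clab M D"
begin

abbreviation "E \<equiv> subst m D C"

lemma E_mem: "e \<in> E \<longleftrightarrow> (\<exists>d\<in>D. \<exists>c\<in>C. e = emb m d c)"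
  unfolding subst_def by blast

lemma E_blk: "e \<in> E \<Longrightarrow> blk m e \<in> D \<and> loc m e \<in> C \<and> e = emb m (blk m e) (loc m e)"
  using E_mem Cg[OF C D] blk_emb loc_emb by (metis subsetD)

lemma E_blkD: "e \<in> E \<Longrightarrow> blk m e \<in> D" using E_blk by blast
lemma E_locC: "e \<in> E \<Longrightarrow> loc m e \<in> C" using E_blk by blast
lemma E_emb: "e \<in> E \<Longrightarrow> emb m (blk m e) (loc m e) = e" using E_blk by metis

lemma emb_in: "d \<in> D \<Longrightarrow> c \<in> C \<Longrightarrow> emb m d c \<in> E" using E_mem by blast

lemma E_grid: "E \<subseteq> grid (M*m)"
proof
  fix e assume "e \<in> E"
  then obtain d c where dc: "d \<in> D" "c \<in> C" "e = emb m d c" using E_mem by blast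
  have "d \<in> grid M" "c \<in> grid m" using dc Cg[OF C D] Dg[OF C D] by auto
  then have "fst d < M" "snd d < M" "fst c < m" "snd c < m" by (auto simp: grid_def)
  moreover have "\<And>x y::nat. x < M \<Longrightarrow> y < m \<Longrightarrow> m*x + y < M*m"
  proof -
    fix x y :: nat assume "x < M" "y < m"
    then have "m*x + y < m*x + m" by simp
    also have "\<dots> = m * Suc x" by simp
    also have "\<dots> \<le> m * M" using \<open>x < M\<close> by (intro mult_le_mono2) simp
    finally show "m*x + y < M*m" by (simp add: mult.commute)
  qed
  ultimately show "e \<in> grid (M*m)" using dc by (auto simp: emb_def grid_def)
qed

abbreviation "rel V \<equiv> {(x,y). x \<in> V \<and> y \<in> V \<and> gadj x y}"

lemma conn_block:
  assumes "d \<in> D" "(c,c') \<in> (rel C)\<^sup>*"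
  shows "(emb m d c, emb m d c') \<in> (rel E)\<^sup>*"
  using assms(2)
proof (induction rule: rtrancl_induct)
  case (step y z)
  then have yz: "y \<in> C" "z \<in> C" "gadj y z" by auto
  then have "gadj (emb m d y) (emb m d z)"
    using gadj_emb Cg[OF C D] by blast
  then have "(emb m d y, emb m d z) \<in> rel E" using yz assms(1) emb_in by auto
  then show ?case using step(3) by (meson rtrancl_into_rtrancl)
qed simp

lemma conn_blocks:
  assumes "(d,d') \<in> (rel D)\<^sup>*" "d \<in> D" "c \<in> C" "c' \<in> C"
  shows "(emb m d c, emb m d' c') \<in> (rel E)\<^sup>*"
  using assms(1) assms(4)
proof (induction arbitrary: c' rule: rtrancl_induct)
  case base
  have "conn gadj C" using C by (simp add: clab_def ctree_def)
  then show ?case using conn_block[OF assms(2)] assms(3) base unfolding conn_def by blast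
next
  case (step y z)
  then have yz: "y \<in> D" "z \<in> D" "gadj y z" by auto
  obtain c1 c2 where c12: "c1 \<in> C" "c2 \<in> C" "xadj m y c1 z c2" using cross_exists[OF C D yz(3)] by blast
  have "gadj (emb m y c1) (emb m z c2)" using gadj_emb c12 Cg[OF C D] by blast
  then have e: "(emb m y c1, emb m z c2) \<in> rel E" using yz c12 emb_in by auto
  have "conn gadj C" using C by (simp add: clab_def ctree_def)
  then have "(emb m z c2, emb m z c') \<in> (rel E)\<^sup>*"
    using conn_block[OF yz(2)] c12 step.prems unfolding conn_def by blast
  then show ?case using step.IH[OF c12(1)] e
    by (meson converse_rtrancl_into_rtrancl rtrancl_trans)
qed

lemma E_conn: "conn gadj E"
  unfolding conn_def
proof (intro ballI)
  fix u v assume "u \<in> E" "v \<in> E"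
  then obtain d c d' c' where "d \<in> D" "c \<in> C" "u = emb m d c" "d' \<in> D" "c' \<in> C" "v = emb m d' c'"
    using E_mem by metis
  moreover have "conn gadj D" using D by (simp add: clab_def ctree_def)
  ultimately show "(u, v) \<in> (rel E)\<^sup>*" using conn_blocks unfolding conn_def by blast
qed

end


lemma succ_conj: "successively P xs \<Longrightarrow> successively Q xs \<Longrightarrow> successively (\<lambda>x y. P x y \<and> Q x y) xs"
  by (induction P xs rule: successively.induct) auto

lemma succ_true: "successively (\<lambda>_ _. True) xs"
  by (induction xs rule: induct_list012) auto

lemma succ_hd_last:
  assumes "distinct cs" "3 \<le> length cs"
  shows "successively (\<lambda>x y. {x,y} \<noteq> {hd cs, last cs}) cs"
proof -
  obtain h rest where cs: "cs = h # rest" using assms by (cases cs) auto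
  then have "rest \<noteq> []" using assms by auto
  then obtain mid l where rest: "rest = mid @ [l]" by (metis rev_exhaust)
  have "mid \<noteq> []" using assms cs rest by auto
  have hl: "hd cs = h" "last cs = l" using cs rest by auto
  have dist: "h \<notin> set mid" "l \<notin> set mid" "h \<noteq> l" using assms(1) cs rest by auto
  have hm: "hd mid \<in> set mid" "last mid \<in> set mid" using \<open>mid \<noteq> []\<close> by auto
  have "successively (\<lambda>x y. {x,y} \<noteq> {h,l}) mid"
    apply (rule successively_mono[OF succ_true[of mid]])
    using dist by (auto simp: doubleton_eq_iff)
  moreover have "{h, hd mid} \<noteq> {h,l}" using dist hm by (auto simp: doubleton_eq_iff)
  moreover have "{last mid, l} \<noteq> {h,l}" using dist hm by (auto simp: doubleton_eq_iff)
  ultimately show ?thesis unfolding hl cs rest using \<open>mid \<noteq> []\<close>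
    by (simp add: successively_append_iff successively_Cons)
qed

lemma rotate_cyc:
  assumes "xs \<noteq> []" "ys \<noteq> []" "successively R (xs @ ys)" "R (last (xs @ ys)) (hd (xs @ ys))"
  shows "successively R (ys @ xs) \<and> R (last (ys @ xs)) (hd (ys @ xs))"
  using assms by (auto simp: successively_append_iff)

lemma rotate_f:
  assumes "x \<in> set cs" "f x \<noteq> f (hd cs)"
  shows "\<exists>xs ys. cs = xs @ ys \<and> xs \<noteq> [] \<and> ys \<noteq> [] \<and> f (last xs) \<noteq> f (hd ys)"
proof -
  let ?P = "\<lambda>y. f y = f (hd cs)"
  have ne: "cs \<noteq> []" using assms by auto
  define xs where "xs = takeWhile ?P cs"
  define ys where "ys = dropWhile ?P cs"
  have "cs = xs @ ys" unfolding xs_def ys_def by simp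
  moreover have "xs \<noteq> []" unfolding xs_def using ne by (cases cs) auto
  moreover have "ys \<noteq> []" unfolding ys_def using assms by (simp add: dropWhile_eq_Nil_conv) blast
  moreover have "?P (last xs)" using \<open>xs \<noteq> []\<close> unfolding xs_def
    by (meson last_in_set set_takeWhileD)
  moreover have "\<not> ?P (hd ys)" using \<open>ys \<noteq> []\<close> unfolding ys_def by (rule hd_dropWhile)
  ultimately show ?thesis by metis
qed


context
  fixes m M :: nat and C D :: "cell set"
  assumes C: "clab m C" and D: "clab M D"
begin

definition cycp :: "cell list \<Rightarrow> bool" where
  "cycp cs = (3 \<le> length cs \<and> distinct cs \<and> set cs \<subseteq> subst m D C \<and> successively gadj cs \<and> gadj (last cs) (hd cs))"

lemma E_gadj_blk:
  assumes "x \<in> subst m D C" "y \<in> subst m D C" "gadj x y"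
  shows "blk m x = blk m y \<and> gadj (loc m x) (loc m y) \<or> xadj m (blk m x) (loc m x) (blk m y) (loc m y)"
proof -
  have g: "loc m x \<in> grid m" "loc m y \<in> grid m" using E_locC[OF C D] assms Cg[OF C D] by blast+
  have "gadj (emb m (blk m x) (loc m x)) (emb m (blk m y) (loc m y))"
    using assms E_emb[OF C D] by simp
  then show ?thesis using gadj_emb[OF g] by blast
qed

lemma all_same_contra:
  assumes "cycp cs" "\<forall>x\<in>set cs. blk m x = blk m (hd cs)"
  shows False
proof -
  let ?d = "blk m (hd cs)"
  have cs: "3 \<le> length cs" "distinct cs" "set cs \<subseteq> subst m D C" "successively gadj cs" "gadj (last cs) (hd cs)"
    using assms(1) by (auto simp: cycp_def)
  have ne: "cs \<noteq> []" using cs by auto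
  have ex: "\<And>x. x \<in> set cs \<Longrightarrow> emb m ?d (loc m x) = x \<and> loc m x \<in> C"
  proof -
    fix x assume x: "x \<in> set cs"
    then have xE: "x \<in> subst m D C" using cs(3) by blast
    have "blk m x = ?d" using x assms(2) by blast
    then show "emb m ?d (loc m x) = x \<and> loc m x \<in> C"
      using E_emb[OF C D xE] E_locC[OF C D xE] by simp
  qed
  have inj: "inj_on (loc m) (set cs)"
  proof (rule inj_onI)
    fix x y assume "x \<in> set cs" "y \<in> set cs" "loc m x = loc m y"
    then show "x = y" using ex[of x] ex[of y] by metis
  qed
  have step: "\<And>x y. x \<in> set cs \<Longrightarrow> y \<in> set cs \<Longrightarrow> gadj x y \<Longrightarrow> gadj (loc m x) (loc m y)"
  proof -
    fix x y assume xy: "x \<in> set cs" "y \<in> set cs" "gadj x y"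
    then have "blk m x = blk m y \<and> gadj (loc m x) (loc m y) \<or> xadj m (blk m x) (loc m x) (blk m y) (loc m y)"
      using E_gadj_blk cs(3) by blast
    moreover have "blk m x = blk m y" using assms(2) xy by auto
    ultimately show "gadj (loc m x) (loc m y)" using xadj_gadj gadj_irrefl by metis
  qed
  have "cyc gadj C" unfolding cyc_def
  proof (intro exI[of _ "map (loc m) cs"] conjI)
    show "3 \<le> length (map (loc m) cs)" using cs by simp
    show "distinct (map (loc m) cs)" by (simp add: distinct_map cs(2) inj)
    show "set (map (loc m) cs) \<subseteq> C"
    proof
      fix z assume "z \<in> set (map (loc m) cs)"
      then obtain x where "x \<in> set cs" "z = loc m x" by auto
      then show "z \<in> C" using ex[of x] by blast
    qed
    have "successively (\<lambda>x y. gadj (loc m x) (loc m y)) cs"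
      by (rule successively_mono[OF cs(4)]) (rule step)
    then show "successively gadj (map (loc m) cs)" by (simp add: successively_map)
    show "gadj (last (map (loc m) cs)) (hd (map (loc m) cs))"
      using step[OF last_in_set[OF ne] hd_in_set[OF ne] cs(5)] ne by (simp add: last_map hd_map)
  qed
  then show False using C by (simp add: clab_def ctree_def)
qed

lemma diff_contra:
  assumes "cycp cs" "blk m (hd cs) \<noteq> blk m (last cs)"
  shows False
proof -
  have cs: "3 \<le> length cs" "distinct cs" "set cs \<subseteq> subst m D C" "successively gadj cs" "gadj (last cs) (hd cs)"
    using assms(1) by (auto simp: cycp_def)
  have ne: "cs \<noteq> []" using cs by auto
  define h where "h = hd cs"
  define l where "l = last cs"
  have hl: "h \<in> subst m D C" "l \<in> subst m D C" using cs ne h_def l_def by auto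
  have hlx: "xadj m (blk m h) (loc m h) (blk m l) (loc m l)"
    using E_gadj_blk[OF hl gadj_sym[OF cs(5)[folded h_def l_def]]] assms(2) h_def l_def by auto
  have lhx: "xadj m (blk m l) (loc m l) (blk m h) (loc m h)"
    using E_gadj_blk[OF hl(2,1) cs(5)[folded h_def l_def]] assms(2) h_def l_def by auto
  have Rab: "gadj (blk m h) (blk m l)" using xadj_gadj[OF hlx] .
  have key: "\<And>x y. x \<in> set cs \<Longrightarrow> y \<in> set cs \<Longrightarrow> gadj x y \<and> {x,y} \<noteq> {h,l} \<Longrightarrow>
     blk m x = blk m y \<or> (gadj (blk m x) (blk m y) \<and> {blk m x, blk m y} \<noteq> {blk m h, blk m l})"
  proof -
    fix x y assume xy: "x \<in> set cs" "y \<in> set cs" "gadj x y \<and> {x,y} \<noteq> {h,l}"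
    have xyE: "x \<in> subst m D C" "y \<in> subst m D C" using xy cs(3) by auto
    show "blk m x = blk m y \<or> (gadj (blk m x) (blk m y) \<and> {blk m x, blk m y} \<noteq> {blk m h, blk m l})"
    proof (cases "blk m x = blk m y")
      case False
      then have xx: "xadj m (blk m x) (loc m x) (blk m y) (loc m y)"
        using E_gadj_blk[OF xyE] xy by blast
      have "{blk m x, blk m y} \<noteq> {blk m h, blk m l}"
      proof
        assume "{blk m x, blk m y} = {blk m h, blk m l}"
        then have "(blk m x = blk m h \<and> blk m y = blk m l) \<or> (blk m x = blk m l \<and> blk m y = blk m h)"
          by (auto simp: doubleton_eq_iff)
        then show False
        proof
          assume b: "blk m x = blk m h \<and> blk m y = blk m l"
          have "loc m x = loc m h \<and> loc m y = loc m l"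
            using cross_unique[OF C D, of "blk m h" "loc m x" "blk m l" "loc m y" "loc m h" "loc m l"]
              xx b hlx E_locC[OF C D] xyE hl by auto
          then have "x = h" "y = l" using b E_emb[OF C D] xyE hl by metis+
          then show False using xy by auto
        next
          assume b: "blk m x = blk m l \<and> blk m y = blk m h"
          have "loc m x = loc m l \<and> loc m y = loc m h"
            using cross_unique[OF C D, of "blk m l" "loc m x" "blk m h" "loc m y" "loc m l" "loc m h"]
              xx b lhx E_locC[OF C D] xyE hl by auto
          then have "x = l" "y = h" using b E_emb[OF C D] xyE hl by metis+
          then show False using xy by auto
        qed
      qed
      then show ?thesis using xadj_gadj[OF xx] by blast
    qed simp
  qed
  have s1: "successively (\<lambda>x y. gadj x y \<and> {x,y} \<noteq> {h,l}) cs"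
    using succ_conj[OF cs(4) succ_hd_last[OF cs(2) cs(1)]] h_def l_def by simp
  have "successively (\<lambda>x y. blk m x = blk m y \<or> (gadj (blk m x) (blk m y) \<and> {blk m x, blk m y} \<noteq> {blk m h, blk m l})) cs"
    by (rule successively_mono[OF s1]) (rule key)
  then have "successively (\<lambda>x y. x = y \<or> (gadj x y \<and> {x,y} \<noteq> {blk m h, blk m l})) (map (blk m) cs)"
    by (simp add: successively_map)
  moreover have "map (blk m) cs \<noteq> []" "hd (map (blk m) cs) = blk m h" "last (map (blk m) cs) = blk m l"
    using ne h_def l_def by (auto simp: hd_map last_map)
  moreover have "set (map (blk m) cs) \<subseteq> D" using cs(3) E_blkD[OF C D] by auto
  ultimately have "cyc gadj D"
    using walk_cycle[of gadj "blk m h" "blk m l" "map (blk m) cs" D, OF gadj_sym Rab] assms(2) h_def l_def by simp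
  then show False using D by (simp add: clab_def ctree_def)
qed

lemma E_acyclic: "\<not> cyc gadj (subst m D C)"
proof
  assume "cyc gadj (subst m D C)"
  then obtain cs where cs: "cycp cs" unfolding cyc_def cycp_def by blast
  show False
  proof (cases "\<forall>x\<in>set cs. blk m x = blk m (hd cs)")
    case True
    then show False using all_same_contra[OF cs] by blast
  next
    case False
    then obtain x where x: "x \<in> set cs" "blk m x \<noteq> blk m (hd cs)" by blast
    obtain xs ys where xy: "cs = xs @ ys" "xs \<noteq> []" "ys \<noteq> []" "blk m (last xs) \<noteq> blk m (hd ys)"
      using rotate_f[OF x] by blast
    have c: "3 \<le> length cs" "distinct cs" "set cs \<subseteq> subst m D C" "successively gadj cs" "gadj (last cs) (hd cs)"
      using cs unfolding cycp_def by auto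
    have r: "successively gadj (ys @ xs) \<and> gadj (last (ys @ xs)) (hd (ys @ xs))"
      using rotate_cyc[OF xy(2) xy(3)] c(4,5) unfolding xy(1) by blast
    have "3 \<le> length (ys @ xs)" using c(1) unfolding xy(1) by simp
    moreover have "distinct (ys @ xs)" using c(2) unfolding xy(1) by (auto simp: distinct_append)
    moreover have "set (ys @ xs) \<subseteq> subst m D C" using c(3) unfolding xy(1) by auto
    ultimately have "cycp (ys @ xs)" using r unfolding cycp_def by blast
    moreover have "blk m (hd (ys @ xs)) \<noteq> blk m (last (ys @ xs))" using xy by simp
    ultimately show False using diff_contra by blast
  qed
qed

end


lemma NM: "0 < m \<Longrightarrow> 0 < M \<Longrightarrow> M*m - 1 = m*(M-1) + (m-1::nat)"
  by (cases M; cases m) (auto simp: algebra_simps)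

lemma coord0: fixes c m d :: nat shows "c < m \<Longrightarrow> m*d + c = (0::nat) \<longleftrightarrow> d = 0 \<and> c = 0"
  by auto

lemma coordN: fixes c m d M :: nat shows "c < m \<Longrightarrow> 0 < M \<Longrightarrow> m*d + c = M*m - 1 \<longleftrightarrow> d = M - 1 \<and> c = m - 1"
  using L_eq[of c m "m-1" d "M-1"] NM[of m M] by auto

context
  fixes m M :: nat and C D :: "cell set"
  assumes C: "clab m C" and D: "clab M D"
begin

lemma mpos: "0 < m" "0 < M" using m4[OF C D] M4[OF C D] by auto

lemma E_memI: "d \<in> D \<Longrightarrow> c \<in> C \<Longrightarrow> emb m d c \<in> subst m D C"
  unfolding subst_def by blast

lemma E_memE:
  assumes "e \<in> subst m D C"
  obtains dx dy cx cy where "(dx,dy) \<in> D" "(cx,cy) \<in> C" "e = (m*dx+cx, m*dy+cy)" "cx < m" "cy < m" "dx < M" "dy < M"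
proof -
  obtain d c where "d \<in> D" "c \<in> C" "e = emb m d c" using assms unfolding subst_def by blast
  moreover have "c \<in> grid m" "d \<in> grid M" using calculation Cg[OF C D] Dg[OF C D] by auto
  ultimately show ?thesis using that[of "fst d" "snd d" "fst c" "snd c"] by (auto simp: emb_def grid_def)
qed

lemma exitx_char:
  "((X,0) \<in> subst m D C \<and> (X, M*m-1) \<in> subst m D C) \<longleftrightarrow>
   (\<exists>dx cx. X = m*dx+cx \<and> cx < m \<and> (dx,0) \<in> D \<and> (dx,M-1) \<in> D \<and> (cx,0) \<in> C \<and> (cx,m-1) \<in> C)"
proof
  assume h: "(X,0) \<in> subst m D C \<and> (X, M*m-1) \<in> subst m D C"
  obtain dx dy cx cy where a: "(dx,dy) \<in> D" "(cx,cy) \<in> C" "(X,0) = (m*dx+cx, m*dy+cy)" "cx < m" "cy < m"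
    using h E_memE by metis
  obtain dx' dy' cx' cy' where b: "(dx',dy') \<in> D" "(cx',cy') \<in> C" "(X,M*m-1) = (m*dx'+cx', m*dy'+cy')" "cx' < m" "cy' < m"
    using h E_memE by metis
  have "dy = 0" "cy = 0" using a coord0[of cy m dy] by auto
  moreover have "dy' = M-1" "cy' = m-1" using b coordN[of cy' m M dy'] mpos by auto
  moreover have "dx = dx'" "cx = cx'" using a b L_eq[of cx m cx' dx dx'] by auto
  ultimately show "\<exists>dx cx. X = m*dx+cx \<and> cx < m \<and> (dx,0) \<in> D \<and> (dx,M-1) \<in> D \<and> (cx,0) \<in> C \<and> (cx,m-1) \<in> C"
    using a b by blast
next
  assume "\<exists>dx cx. X = m*dx+cx \<and> cx < m \<and> (dx,0) \<in> D \<and> (dx,M-1) \<in> D \<and> (cx,0) \<in> C \<and> (cx,m-1) \<in> C"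
  then obtain dx cx where h: "X = m*dx+cx" "(dx,0) \<in> D" "(dx,M-1) \<in> D" "(cx,0) \<in> C" "(cx,m-1) \<in> C" by blast
  have "emb m (dx,0) (cx,0) = (X,0)" using h by (simp add: emb_def)
  moreover have "emb m (dx,M-1) (cx,m-1) = (X, M*m-1)" using h NM[of m M] mpos by (simp add: emb_def)
  ultimately show "(X,0) \<in> subst m D C \<and> (X, M*m-1) \<in> subst m D C"
    using E_memI h by metis
qed

lemma exity_char:
  "((0,Y) \<in> subst m D C \<and> (M*m-1, Y) \<in> subst m D C) \<longleftrightarrow>
   (\<exists>dy cy. Y = m*dy+cy \<and> cy < m \<and> (0,dy) \<in> D \<and> (M-1,dy) \<in> D \<and> (0,cy) \<in> C \<and> (m-1,cy) \<in> C)"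
proof
  assume h: "(0,Y) \<in> subst m D C \<and> (M*m-1,Y) \<in> subst m D C"
  obtain dx dy cx cy where a: "(dx,dy) \<in> D" "(cx,cy) \<in> C" "(0,Y) = (m*dx+cx, m*dy+cy)" "cx < m" "cy < m"
    using h E_memE by metis
  obtain dx' dy' cx' cy' where b: "(dx',dy') \<in> D" "(cx',cy') \<in> C" "(M*m-1,Y) = (m*dx'+cx', m*dy'+cy')" "cx' < m" "cy' < m"
    using h E_memE by metis
  have "dx = 0" "cx = 0" using a coord0[of cx m dx] by auto
  moreover have "dx' = M-1" "cx' = m-1" using b coordN[of cx' m M dx'] mpos by auto
  moreover have "dy = dy'" "cy = cy'" using a b L_eq[of cy m cy' dy dy'] by auto
  ultimately show "\<exists>dy cy. Y = m*dy+cy \<and> cy < m \<and> (0,dy) \<in> D \<and> (M-1,dy) \<in> D \<and> (0,cy) \<in> C \<and> (m-1,cy) \<in> C"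
    using a b by blast
next
  assume "\<exists>dy cy. Y = m*dy+cy \<and> cy < m \<and> (0,dy) \<in> D \<and> (M-1,dy) \<in> D \<and> (0,cy) \<in> C \<and> (m-1,cy) \<in> C"
  then obtain dy cy where h: "Y = m*dy+cy" "(0,dy) \<in> D" "(M-1,dy) \<in> D" "(0,cy) \<in> C" "(m-1,cy) \<in> C" by blast
  have "emb m (0,dy) (0,cy) = (0,Y)" using h by (simp add: emb_def)
  moreover have "emb m (M-1,dy) (m-1,cy) = (M*m-1, Y)" using h NM[of m M] mpos by (simp add: emb_def)
  ultimately show "(0,Y) \<in> subst m D C \<and> (M*m-1,Y) \<in> subst m D C"
    using E_memI h by metis
qed

lemma clab_subst: "clab (M*m) (subst m D C)"
proof -
  let ?E = "subst m D C"
  have Dc: "D \<subseteq> grid M" "C \<subseteq> grid m" using Dg[OF C D] Cg[OF C D] by auto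
  have Dt: "ctree D" and Ct: "ctree C" using C D by (auto simp: clab_def)
  have fin: "finite ?E"
  proof -
    have "?E = (\<lambda>(d,c). emb m d c) ` (D \<times> C)" unfolding subst_def by auto
    then show ?thesis using Dt Ct by (simp add: ctree_def)
  qed
  have ne: "?E \<noteq> {}"
  proof -
    obtain d c where "d \<in> D" "c \<in> C" using Dt Ct by (auto simp: ctree_def)
    then show ?thesis using E_memI by blast
  qed
  have tree: "ctree ?E" unfolding ctree_def
    using fin ne E_conn[OF C D] E_acyclic[OF C D] by blast
  have ex1: "\<exists>!x. x < M*m \<and> (x,0) \<in> ?E \<and> (x,M*m-1) \<in> ?E"
  proof -
    obtain x0 where x0: "x0 < M" "(x0,0) \<in> D" "(x0,M-1) \<in> D"
      and u0: "\<And>x. x < M \<Longrightarrow> (x,0) \<in> D \<Longrightarrow> (x,M-1) \<in> D \<Longrightarrow> x = x0"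
    proof -
      have "\<exists>!x. x < M \<and> (x,0) \<in> D \<and> (x,M-1) \<in> D" using D by (simp add: clab_def)
      then show ?thesis using that by (metis (no_types, lifting))
    qed
    obtain x1 where x1: "x1 < m" "(x1,0) \<in> C" "(x1,m-1) \<in> C"
      and u1: "\<And>x. x < m \<Longrightarrow> (x,0) \<in> C \<Longrightarrow> (x,m-1) \<in> C \<Longrightarrow> x = x1"
    proof -
      have "\<exists>!x. x < m \<and> (x,0) \<in> C \<and> (x,m-1) \<in> C" using C by (simp add: clab_def)
      then show ?thesis using that by (metis (no_types, lifting))
    qed
    have Eg: "?E \<subseteq> grid (M*m)" using E_grid[OF C D] .
    have "(m*x0+x1,0) \<in> ?E \<and> (m*x0+x1,M*m-1) \<in> ?E" using exitx_char[of "m*x0+x1"] x0 x1 by blast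
    moreover have "m*x0+x1 < M*m" using calculation Eg by (auto simp: grid_def)
    moreover have "\<And>X. (X,0) \<in> ?E \<and> (X,M*m-1) \<in> ?E \<Longrightarrow> X = m*x0+x1"
    proof -
      fix X assume "(X,0) \<in> ?E \<and> (X,M*m-1) \<in> ?E"
      then obtain dx cx where h: "X = m*dx+cx" "cx < m" "(dx,0) \<in> D" "(dx,M-1) \<in> D" "(cx,0) \<in> C" "(cx,m-1) \<in> C"
        using exitx_char by blast
      have "dx < M" using h Dc by (auto simp: grid_def)
      then show "X = m*x0+x1" using h u0 u1 by metis
    qed
    ultimately show ?thesis by blast
  qed
  have ey1: "\<exists>!y. y < M*m \<and> (0,y) \<in> ?E \<and> (M*m-1,y) \<in> ?E"
  proof -
    obtain x0 where x0: "x0 < M" "(0,x0) \<in> D" "(M-1,x0) \<in> D"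
      and u0: "\<And>x. x < M \<Longrightarrow> (0,x) \<in> D \<Longrightarrow> (M-1,x) \<in> D \<Longrightarrow> x = x0"
    proof -
      have "\<exists>!x. x < M \<and> (0,x) \<in> D \<and> (M-1,x) \<in> D" using D by (simp add: clab_def)
      then show ?thesis using that by (metis (no_types, lifting))
    qed
    obtain x1 where x1: "x1 < m" "(0,x1) \<in> C" "(m-1,x1) \<in> C"
      and u1: "\<And>x. x < m \<Longrightarrow> (0,x) \<in> C \<Longrightarrow> (m-1,x) \<in> C \<Longrightarrow> x = x1"
    proof -
      have "\<exists>!x. x < m \<and> (0,x) \<in> C \<and> (m-1,x) \<in> C" using C by (simp add: clab_def)
      then show ?thesis using that by (metis (no_types, lifting))
    qed
    have Eg: "?E \<subseteq> grid (M*m)" using E_grid[OF C D] .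
    have "(0,m*x0+x1) \<in> ?E \<and> (M*m-1,m*x0+x1) \<in> ?E" using exity_char[of "m*x0+x1"] x0 x1 by blast
    moreover have "m*x0+x1 < M*m" using calculation Eg by (auto simp: grid_def)
    moreover have "\<And>X. (0,X) \<in> ?E \<and> (M*m-1,X) \<in> ?E \<Longrightarrow> X = m*x0+x1"
    proof -
      fix X assume "(0,X) \<in> ?E \<and> (M*m-1,X) \<in> ?E"
      then obtain dx cx where h: "X = m*dx+cx" "cx < m" "(0,dx) \<in> D" "(M-1,dx) \<in> D" "(0,cx) \<in> C" "(m-1,cx) \<in> C"
        using exity_char by blast
      have "dx < M" using h Dc by (auto simp: grid_def)
      then show "X = m*x0+x1" using h u0 u1 by metis
    qed
    ultimately show ?thesis by blast
  qed
  have cor: "\<And>a b. (a,b) \<in> ?E \<Longrightarrow> (a = 0 \<longrightarrow> (\<exists>d\<in>D. fst d = 0 \<and> (b = 0 \<longrightarrow> snd d = 0) \<and> (b = M*m-1 \<longrightarrow> snd d = M-1))) \<and>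
        (a = M*m-1 \<longrightarrow> (\<exists>d\<in>D. fst d = M-1 \<and> (b = 0 \<longrightarrow> snd d = 0) \<and> (b = M*m-1 \<longrightarrow> snd d = M-1)))"
  proof -
    fix a b assume "(a,b) \<in> ?E"
    then obtain dx dy cx cy where h: "(dx,dy) \<in> D" "(a,b) = (m*dx+cx, m*dy+cy)" "cx < m" "cy < m"
      using E_memE by metis
    have f: "a = 0 \<Longrightarrow> dx = 0" "a = M*m-1 \<Longrightarrow> dx = M-1" "b = 0 \<Longrightarrow> dy = 0" "b = M*m-1 \<Longrightarrow> dy = M-1"
      using h coord0[of cx m dx] coord0[of cy m dy] coordN[of cx m M dx] coordN[of cy m M dy] mpos by auto
    show "?thesis a b"
    proof (intro conjI impI)
      assume "a = 0" then show "\<exists>d\<in>D. fst d = 0 \<and> (b = 0 \<longrightarrow> snd d = 0) \<and> (b = M*m-1 \<longrightarrow> snd d = M-1)"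
        using f h(1) by (intro bexI[of _ "(dx,dy)"]) auto
    next
      assume "a = M*m-1" then show "\<exists>d\<in>D. fst d = M-1 \<and> (b = 0 \<longrightarrow> snd d = 0) \<and> (b = M*m-1 \<longrightarrow> snd d = M-1)"
        using f h(1) by (intro bexI[of _ "(dx,dy)"]) auto
    qed
  qed
  have c1: "\<not> ((0,0) \<in> ?E \<and> (M*m-1,M*m-1) \<in> ?E)"
  proof
    assume "(0,0) \<in> ?E \<and> (M*m-1,M*m-1) \<in> ?E"
    then have "(0,0) \<in> D" "(M-1,M-1) \<in> D" using cor[of 0 0] cor[of "M*m-1" "M*m-1"] by (auto simp: prod_eq_iff)
    then show False using D by (simp add: clab_def)
  qed
  have c2: "\<not> ((M*m-1,0) \<in> ?E \<and> (0,M*m-1) \<in> ?E)"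
  proof
    assume "(M*m-1,0) \<in> ?E \<and> (0,M*m-1) \<in> ?E"
    then have "(M-1,0) \<in> D" "(0,M-1) \<in> D" using cor[of "M*m-1" 0] cor[of 0 "M*m-1"] mpos by (auto simp: prod_eq_iff)
    then show False using D by (simp add: clab_def)
  qed
  have "4*1 \<le> M*m" using m4[OF C D] M4[OF C D] by (intro mult_le_mono) auto
  then have "4 \<le> M*m" by simp
  then show ?thesis unfolding clab_def using E_grid[OF C D] tree ex1 ey1 c1 c2 by blast
qed

end


definition valid :: "real \<times> real \<times> real \<times> real \<Rightarrow> bool" where
  "valid a = (case a of (a1,a2,a3,a4) \<Rightarrow> 0 \<le> a1 \<and> 0 \<le> a2 \<and> 0 \<le> a3 \<and> 0 \<le> a4 \<and>
      a1 + a2 + a3 + a4 = 1 \<and> (a2 = 0 \<or> a4 = 0))"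

lemma twozero:
  fixes p q X Y :: real
  assumes "0 \<le> p" "0 \<le> q" "0 < X" "0 < Y" "p*X + q*Y = 0"
  shows "p = 0 \<and> q = 0"
proof -
  have "0 \<le> p*X" "0 \<le> q*Y" using assms by auto
  then have "p*X = 0" "q*Y = 0" using assms(5) by linarith+
  then show ?thesis using assms(3,4) by auto
qed

lemma cross_facts:
  assumes "convex_quad_ccw (Q1,Q2,Q3,Q4)"
  shows "cross2 (Q2-Q1) (Q3-Q1) > 0" "cross2 (Q3-Q1) (Q4-Q1) > 0" "cross2 (Q2-Q1) (Q4-Q1) > 0"
proof -
  have i1: "cross2 (Q2-Q1) (Q3-Q2) = cross2 (Q2-Q1) (Q3-Q1)" by (simp add: cross2_def algebra_simps)
  have i2: "cross2 (Q4-Q3) (Q1-Q4) = cross2 (Q3-Q1) (Q4-Q1)" by (simp add: cross2_def algebra_simps)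
  have i3: "cross2 (Q1-Q4) (Q2-Q1) = cross2 (Q2-Q1) (Q4-Q1)" by (simp add: cross2_def algebra_simps)
  show "cross2 (Q2-Q1) (Q3-Q1) > 0" "cross2 (Q3-Q1) (Q4-Q1) > 0" "cross2 (Q2-Q1) (Q4-Q1) > 0"
    using assms i1 i2 i3 by (auto simp: convex_quad_ccw_def)
qed

lemma comb_comp: "comb (Q1,Q2,Q3,Q4) (a1,a2,a3,a4) $ i = a1 * Q1$i + a2 * Q2$i + a3 * Q3$i + a4 * Q4$i"
  by (simp add: comb_def)

lemma comb_inj:
  assumes cv: "convex_quad_ccw (Q1,Q2,Q3,Q4)" and va: "valid a" and vb: "valid b"
    and eq: "comb (Q1,Q2,Q3,Q4) a = comb (Q1,Q2,Q3,Q4) b"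
  shows "a = b"
proof -
  obtain a1 a2 a3 a4 where a: "a = (a1,a2,a3,a4)" by (cases a) auto
  obtain b1 b2 b3 b4 where b: "b = (b1,b2,b3,b4)" by (cases b) auto
  have A: "0 \<le> a1" "0 \<le> a2" "0 \<le> a3" "0 \<le> a4" "a1+a2+a3+a4 = 1" "a2 = 0 \<or> a4 = 0"
    using va unfolding a valid_def by auto
  have B: "0 \<le> b1" "0 \<le> b2" "0 \<le> b3" "0 \<le> b4" "b1+b2+b3+b4 = 1" "b2 = 0 \<or> b4 = 0"
    using vb unfolding b valid_def by auto
  define X where "X = cross2 (Q2-Q1) (Q3-Q1)"
  define Y where "Y = cross2 (Q3-Q1) (Q4-Q1)"
  define Z where "Z = cross2 (Q2-Q1) (Q4-Q1)"
  have XYZ: "X > 0" "Y > 0" "Z > 0" using cross_facts[OF cv] X_def Y_def Z_def by auto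
  have e: "\<And>i. a1 * Q1$i + a2 * Q2$i + a3 * Q3$i + a4 * Q4$i = b1 * Q1$i + b2 * Q2$i + b3 * Q3$i + b4 * Q4$i"
    using eq unfolding a b by (metis comb_comp)
  define p where "p i = (a2-b2)*(Q2$i-Q1$i) + (a3-b3)*(Q3$i-Q1$i) + (a4-b4)*(Q4$i-Q1$i)" for i
  have pid: "p i = (a1 * Q1$i + a2 * Q2$i + a3 * Q3$i + a4 * Q4$i) - (b1 * Q1$i + b2 * Q2$i + b3 * Q3$i + b4 * Q4$i)
      - ((a1+a2+a3+a4) - (b1+b2+b3+b4)) * Q1$i" for i
    unfolding p_def by (simp add: algebra_simps)
  have p0: "p i = 0" for i using pid[of i] e[of i] A(5) B(5) by simp
  have E1: "(a2-b2)*X - (a4-b4)*Y = p 1 * (Q3$2-Q1$2) - p 2 * (Q3$1 - Q1$1)"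
    unfolding p_def X_def Y_def cross2_def by (simp add: algebra_simps)
  have E2: "(a3-b3)*X + (a4-b4)*Z = - (p 1 * (Q2$2-Q1$2) - p 2 * (Q2$1 - Q1$1))"
    unfolding p_def X_def Z_def cross2_def by (simp add: algebra_simps)
  have E1': "(a2-b2)*X = (a4-b4)*Y" using E1 p0 by simp
  have E2': "(a3-b3)*X + (a4-b4)*Z = 0" using E2 p0 by simp
  have d24: "a2 = b2 \<and> a4 = b4"
  proof -
    consider "a4 = 0" "b4 = 0" | "a2 = 0" "b2 = 0" | "a4 = 0" "b2 = 0" | "a2 = 0" "b4 = 0"
      using A(6) B(6) by blast
    then show ?thesis
    proof cases
      case 1 then show ?thesis using E1' XYZ by simp
    next
      case 2 then show ?thesis using E1' XYZ by simp
    next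
      case 3
      then have "a2*X + b4*Y = 0" using E1' by (simp add: algebra_simps)
      then show ?thesis using twozero[OF A(2) B(4) XYZ(1,2)] 3 by simp
    next
      case 4
      then have "b2*X + a4*Y = 0" using E1' by (simp add: algebra_simps)
      then show ?thesis using twozero[OF B(2) A(4) XYZ(1,2)] 4 by simp
    qed
  qed
  then have "(a3-b3)*X = 0" using E2' by simp
  then have "a3 = b3" using XYZ by simp
  then have "a1 = b1" using d24 A(5) B(5) by linarith
  then show ?thesis unfolding a b using d24 \<open>a3 = b3\<close> by simp
qed


lemma qc:
  assumes cv: "convex_quad_ccw (Q1,Q2,Q3,Q4)" and va: "valid a"
  shows "quad_coords (Q1,Q2,Q3,Q4) (comb (Q1,Q2,Q3,Q4) a) = a"
proof -
  obtain a1 a2 a3 a4 where a: "a = (a1,a2,a3,a4)" by (cases a) auto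
  have A: "0 \<le> a1" "0 \<le> a2" "0 \<le> a3" "0 \<le> a4" "a1+a2+a3+a4 = 1" "a2 = 0 \<or> a4 = 0"
    using va unfolding a valid_def by auto
  let ?x = "comb (Q1,Q2,Q3,Q4) a"
  have hull: "?x \<in> convex hull {Q1,Q2,Q3} \<longleftrightarrow> a4 = 0"
  proof
    assume "?x \<in> convex hull {Q1,Q2,Q3}"
    then obtain u v w where uvw: "0 \<le> u" "0 \<le> v" "0 \<le> w" "u+v+w = 1" "?x = u *\<^sub>R Q1 + v *\<^sub>R Q2 + w *\<^sub>R Q3"
      unfolding convex_hull_3 by blast
    have "?x = comb (Q1,Q2,Q3,Q4) (u,v,w,0)" using uvw by (simp add: comb_def)
    moreover have "valid (u,v,w,0)" using uvw by (simp add: valid_def)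
    ultimately have "a = (u,v,w,0)" using comb_inj[OF cv va] by metis
    then show "a4 = 0" using a by simp
  next
    assume "a4 = 0"
    then have "?x = a1 *\<^sub>R Q1 + a2 *\<^sub>R Q2 + a3 *\<^sub>R Q3" unfolding a by (simp add: comb_def)
    then show "?x \<in> convex hull {Q1,Q2,Q3}" unfolding convex_hull_3 using A \<open>a4 = 0\<close> by fastforce
  qed
  show ?thesis
  proof (cases "a4 = 0")
    case True
    have "(THE b. case b of (b1,b2,b3,b4) \<Rightarrow> b4 = 0 \<and> b1 \<ge> 0 \<and> b2 \<ge> 0 \<and> b3 \<ge> 0 \<and>
           b1 + b2 + b3 = 1 \<and> ?x = comb (Q1,Q2,Q3,Q4) b) = a"
    proof (rule the_equality)
      show "case a of (b1,b2,b3,b4) \<Rightarrow> b4 = 0 \<and> b1 \<ge> 0 \<and> b2 \<ge> 0 \<and> b3 \<ge> 0 \<and>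
           b1 + b2 + b3 = 1 \<and> ?x = comb (Q1,Q2,Q3,Q4) a" using A True unfolding a by simp
    next
      fix b assume "case b of (b1,b2,b3,b4) \<Rightarrow> b4 = 0 \<and> b1 \<ge> 0 \<and> b2 \<ge> 0 \<and> b3 \<ge> 0 \<and>
           b1 + b2 + b3 = 1 \<and> ?x = comb (Q1,Q2,Q3,Q4) b"
      then have "valid b" "?x = comb (Q1,Q2,Q3,Q4) b" by (auto simp: valid_def split: prod.splits)
      then show "b = a" using comb_inj[OF cv va] by metis
    qed
    then show ?thesis using hull True unfolding quad_coords_def by simp
  next
    case False
    then have a2: "a2 = 0" using A by simp
    have "(THE b. case b of (b1,b2,b3,b4) \<Rightarrow> b2 = 0 \<and> b1 \<ge> 0 \<and> b3 \<ge> 0 \<and> b4 \<ge> 0 \<and>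
           b1 + b3 + b4 = 1 \<and> ?x = comb (Q1,Q2,Q3,Q4) b) = a"
    proof (rule the_equality)
      show "case a of (b1,b2,b3,b4) \<Rightarrow> b2 = 0 \<and> b1 \<ge> 0 \<and> b3 \<ge> 0 \<and> b4 \<ge> 0 \<and>
           b1 + b3 + b4 = 1 \<and> ?x = comb (Q1,Q2,Q3,Q4) a" using A a2 unfolding a by simp
    next
      fix b assume "case b of (b1,b2,b3,b4) \<Rightarrow> b2 = 0 \<and> b1 \<ge> 0 \<and> b3 \<ge> 0 \<and> b4 \<ge> 0 \<and>
           b1 + b3 + b4 = 1 \<and> ?x = comb (Q1,Q2,Q3,Q4) b"
      then have "valid b" "?x = comb (Q1,Q2,Q3,Q4) b" by (auto simp: valid_def split: prod.splits)
      then show "b = a" using comb_inj[OF cv va] by metis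
    qed
    then show ?thesis using hull False unfolding quad_coords_def by simp
  qed
qed

lemma PV_comb:
  assumes "convex_quad_ccw (Q1,Q2,Q3,Q4)" "valid a"
  shows "PV (Q1,Q2,Q3,Q4) V (comb (Q1,Q2,Q3,Q4) a) = comb V a"
  unfolding PV_def using qc[OF assms] by simp

lemma comb_lin:
  "comb (comb Q (p1,p2,p3,p4), comb Q (q1,q2,q3,q4), comb Q (r1,r2,r3,r4), comb Q (t1,t2,t3,t4)) (a1,a2,a3,a4)
   = comb Q (a1*p1+a2*q1+a3*r1+a4*t1, a1*p2+a2*q2+a3*r2+a4*t2, a1*p3+a2*q3+a3*r3+a4*t3, a1*p4+a2*q4+a3*r4+a4*t4)"
proof -
  obtain Q1 Q2 Q3 Q4 where Q: "Q = (Q1,Q2,Q3,Q4)" by (cases Q) auto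
  show ?thesis unfolding Q comb_def by (simp add: algebra_simps scaleR_add_right scaleR_add_left)
qed


definition alph :: "nat \<Rightarrow> nat \<Rightarrow> nat \<Rightarrow> real \<times> real \<times> real \<times> real" where
  "alph M x y = ((real M - real (max x y)) / real M, (real x - real (min x y)) / real M,
                 real (min x y) / real M, (real y - real (min x y)) / real M)"

definition ptg :: "quad \<Rightarrow> nat \<Rightarrow> nat \<Rightarrow> nat \<Rightarrow> pt" where
  "ptg Q M x y = comb Q (alph M x y)"

definition sqr :: "quad \<Rightarrow> nat \<Rightarrow> nat \<times> nat \<Rightarrow> quad" where
  "sqr Q M c = (ptg Q M (fst c) (snd c), ptg Q M (Suc (fst c)) (snd c),
                ptg Q M (Suc (fst c)) (Suc (snd c)), ptg Q M (fst c) (Suc (snd c)))"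

lemma valid_alph:
  assumes "0 < M" "x \<le> M" "y \<le> M"
  shows "valid (alph M x y)"
proof -
  have "real (max x y) \<le> real M" using assms by simp
  moreover have "real (max x y) + real (min x y) = real x + real y" by (simp add: max_def min_def)
  moreover have "real (min x y) \<le> real x" "real (min x y) \<le> real y" by auto
  moreover have "min x y = x \<or> min x y = y" by (simp add: min_def)
  ultimately show ?thesis using assms unfolding valid_def alph_def
    by (auto simp: field_simps add_divide_distrib[symmetric])
qed

lemma ptg_inj:
  assumes cv: "convex_quad_ccw (Q1,Q2,Q3,Q4)" and "0 < M" "x \<le> M" "y \<le> M" "x' \<le> M" "y' \<le> M"
  shows "ptg (Q1,Q2,Q3,Q4) M x y = ptg (Q1,Q2,Q3,Q4) M x' y' \<longleftrightarrow> x = x' \<and> y = y'"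
proof
  assume "ptg (Q1,Q2,Q3,Q4) M x y = ptg (Q1,Q2,Q3,Q4) M x' y'"
  then have "alph M x y = alph M x' y'"
    using comb_inj[OF cv valid_alph valid_alph] assms unfolding ptg_def by blast
  then have e: "real x - real (min x y) = real x' - real (min x' y')" "real (min x y) = real (min x' y')"
    "real y - real (min x y) = real y' - real (min x' y')"
    using assms(2) unfolding alph_def by (auto simp: divide_cancel_right)
  then have "min x y = min x' y'" using of_nat_eq_iff by blast
  then show "x = x' \<and> y = y'" using e by auto
qed simp

lemma max_min_lt:
  fixes x y :: nat
  shows "x < y \<Longrightarrow> max x y = y \<and> min x y = x" "x \<le> y \<Longrightarrow> max x y = y \<and> min x y = x"
        "y \<le> x \<Longrightarrow> max x y = x \<and> min x y = y"
  by auto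

lemma mono_lt: "x < y \<Longrightarrow> x' \<le> m \<Longrightarrow> m*x + x' \<le> m*y + (y'::nat)"
proof -
  assume "x < y" "x' \<le> m"
  then have "m*x + x' \<le> m * Suc x" by simp
  also have "\<dots> \<le> m*y" using \<open>x < y\<close> by (intro mult_le_mono2) simp
  finally show ?thesis by simp
qed

lemma alph_compose:
  fixes x y x' y' m M :: nat
  assumes "0 < m" "0 < M" "x < M" "y < M" "x' \<le> m" "y' \<le> m"
  defines "a \<equiv> alph m x' y'" and "p \<equiv> alph M x y" and "q \<equiv> alph M (Suc x) y"
    and "r \<equiv> alph M (Suc x) (Suc y)" and "t \<equiv> alph M x (Suc y)"
  shows "(fst a * fst p + fst (snd a) * fst q + fst (snd (snd a)) * fst r + snd (snd (snd a)) * fst t,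
          fst a * fst (snd p) + fst (snd a) * fst (snd q) + fst (snd (snd a)) * fst (snd r) + snd (snd (snd a)) * fst (snd t),
          fst a * fst (snd (snd p)) + fst (snd a) * fst (snd (snd q)) + fst (snd (snd a)) * fst (snd (snd r)) + snd (snd (snd a)) * fst (snd (snd t)),
          fst a * snd (snd (snd p)) + fst (snd a) * snd (snd (snd q)) + fst (snd (snd a)) * snd (snd (snd r)) + snd (snd (snd a)) * snd (snd (snd t)))
         = alph (M*m) (m*x+x') (m*y+y')"
proof -
  have mM: "real m > 0" "real M > 0" using assms by auto
  consider (c1) "x < y" | (c2) "x = y" | (c3) "y < x" by linarith
  then show ?thesis
  proof cases
    case c1
    have t: "m*x+x' \<le> m*y+y'" using mono_lt[OF c1 assms(5)] .
    have s: "Suc x \<le> y" using c1 by simp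
    show ?thesis
    proof (cases "x' \<le> y'")
      case True
      then show ?thesis unfolding a_def p_def q_def r_def t_def alph_def
        using c1 s t mM by (simp add: max_def min_def field_simps; simp add: algebra_simps)
    next
      case False
      then show ?thesis unfolding a_def p_def q_def r_def t_def alph_def
        using c1 s t mM by (simp add: max_def min_def field_simps; simp add: algebra_simps)
    qed
  next
    case c2
    show ?thesis
    proof (cases "x' \<le> y'")
      case True
      then have t: "m*x+x' \<le> m*y+y'" using c2 by simp
      then show ?thesis unfolding a_def p_def q_def r_def t_def alph_def
        using c2 True mM by (simp add: max_def min_def field_simps; simp add: algebra_simps)
    next
      case False
      then have t: "m*y+y' \<le> m*x+x'" using c2 by simp
      then show ?thesis unfolding a_def p_def q_def r_def t_def alph_def
        using c2 False mM by (simp add: max_def min_def field_simps; simp add: algebra_simps)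
    qed
  next
    case c3
    have t: "m*y+y' \<le> m*x+x'" using mono_lt[OF c3 assms(6)] .
    have s: "Suc y \<le> x" using c3 by simp
    show ?thesis
    proof (cases "x' \<le> y'")
      case True
      then show ?thesis unfolding a_def p_def q_def r_def t_def alph_def
        using c3 s t mM by (simp add: max_def min_def field_simps; simp add: algebra_simps)
    next
      case False
      then show ?thesis unfolding a_def p_def q_def r_def t_def alph_def
        using c3 s t mM by (simp add: max_def min_def field_simps; simp add: algebra_simps)
    qed
  qed
qed


lemma comb_lin':
  "comb (comb Q p, comb Q q, comb Q r, comb Q t) a =
   comb Q (fst a * fst p + fst (snd a) * fst q + fst (snd (snd a)) * fst r + snd (snd (snd a)) * fst t,
          fst a * fst (snd p) + fst (snd a) * fst (snd q) + fst (snd (snd a)) * fst (snd r) + snd (snd (snd a)) * fst (snd t),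
          fst a * fst (snd (snd p)) + fst (snd a) * fst (snd (snd q)) + fst (snd (snd a)) * fst (snd (snd r)) + snd (snd (snd a)) * fst (snd (snd t)),
          fst a * snd (snd (snd p)) + fst (snd a) * snd (snd (snd q)) + fst (snd (snd a)) * snd (snd (snd r)) + snd (snd (snd a)) * snd (snd (snd t)))"
proof -
  obtain p1 p2 p3 p4 where "p = (p1,p2,p3,p4)" by (cases p) auto
  moreover obtain q1 q2 q3 q4 where "q = (q1,q2,q3,q4)" by (cases q) auto
  moreover obtain r1 r2 r3 r4 where "r = (r1,r2,r3,r4)" by (cases r) auto
  moreover obtain t1 t2 t3 t4 where "t = (t1,t2,t3,t4)" by (cases t) auto
  moreover obtain a1 a2 a3 a4 where "a = (a1,a2,a3,a4)" by (cases a) auto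
  ultimately show ?thesis using comb_lin by simp
qed

context
  fixes Q1 Q2 Q3 Q4 :: pt
  assumes cv: "convex_quad_ccw (Q1,Q2,Q3,Q4)"
begin

abbreviation "QQ \<equiv> (Q1,Q2,Q3,Q4)"

lemma ptg_compose:
  fixes x y x' y' m M :: nat
  assumes "0 < m" "0 < M" "x < M" "y < M" "x' \<le> m" "y' \<le> m"
  shows "PV QQ (sqr QQ M (x,y)) (ptg QQ m x' y') = ptg QQ (M*m) (m*x+x') (m*y+y')"
proof -
  have "PV QQ (sqr QQ M (x,y)) (ptg QQ m x' y') = comb (sqr QQ M (x,y)) (alph m x' y')"
    unfolding ptg_def using PV_comb[OF cv valid_alph] assms by simp
  also have "\<dots> = ptg QQ (M*m) (m*x+x') (m*y+y')"
    unfolding sqr_def ptg_def comb_lin' using alph_compose[OF assms] by simp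
  finally show ?thesis .
qed

lemma quad_map_sqr:
  assumes "d \<in> grid M" "c \<in> grid m"
  shows "quad_map QQ (sqr QQ M d) (sqr QQ m c) = sqr QQ (M*m) (emb m d c)"
proof -
  obtain dx dy where d: "d = (dx,dy)" by force
  obtain cx cy where c: "c = (cx,cy)" by force
  have b: "dx < M" "dy < M" "cx < m" "cy < m" using assms d c by (auto simp: grid_def)
  then have p: "0 < m" "0 < M" by auto
  have e: "sqr QQ m (cx,cy) = (ptg QQ m cx cy, ptg QQ m (Suc cx) cy, ptg QQ m (Suc cx) (Suc cy), ptg QQ m cx (Suc cy))"
    by (simp add: sqr_def)
  have f: "sqr QQ (M*m) (m*dx+cx, m*dy+cy) = (ptg QQ (M*m) (m*dx+cx) (m*dy+cy), ptg QQ (M*m) (m*dx+Suc cx) (m*dy+cy),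
       ptg QQ (M*m) (m*dx+Suc cx) (m*dy+Suc cy), ptg QQ (M*m) (m*dx+cx) (m*dy+Suc cy))"
    by (simp add: sqr_def)
  have "quad_map QQ (sqr QQ M (dx,dy)) (sqr QQ m (cx,cy)) = sqr QQ (M*m) (m*dx+cx, m*dy+cy)"
    unfolding e f quad_map_def using b
    by (simp only: prod.case ptg_compose[OF p b(1,2)] Suc_leI le_less_trans less_imp_le)
  then show ?thesis unfolding d c emb_def by simp
qed

lemma ptg_inj':
  assumes "0 < M" "x \<le> M" "y \<le> M" "x' \<le> M" "y' \<le> M"
  shows "ptg QQ M x y = ptg QQ M x' y' \<longleftrightarrow> x = x' \<and> y = y'"
  using ptg_inj[OF cv assms] .

lemma sqr_inj:
  assumes "c \<in> grid M" "d \<in> grid M"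
  shows "sqr QQ M c = sqr QQ M d \<longleftrightarrow> c = d"
proof
  assume "sqr QQ M c = sqr QQ M d"
  then have "ptg QQ M (fst c) (snd c) = ptg QQ M (fst d) (snd d)" unfolding sqr_def by simp
  then show "c = d" using ptg_inj'[of M "fst c" "snd c" "fst d" "snd d"] assms
    by (auto simp: grid_def prod_eq_iff)
qed simp

lemma sides_sqr:
  assumes "c \<in> grid M" "d \<in> grid M"
  shows "sides (sqr QQ M c) \<inter> sides (sqr QQ M d) \<noteq> {} \<longleftrightarrow> c = d \<or> gadj c d"
proof -
  obtain cx cy where c: "c = (cx,cy)" by force
  obtain dx dy where d: "d = (dx,dy)" by force
  have b: "cx < M" "cy < M" "dx < M" "dy < M" using assms c d by (auto simp: grid_def)
  then have M: "0 < M" by auto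
  have inj: "\<And>a b a' b'. a \<le> M \<Longrightarrow> b \<le> M \<Longrightarrow> a' \<le> M \<Longrightarrow> b' \<le> M \<Longrightarrow>
     ptg QQ M a b = ptg QQ M a' b' \<longleftrightarrow> a = a' \<and> b = b'"
    using ptg_inj'[OF M] by blast
  have bb: "cx \<le> M" "cy \<le> M" "dx \<le> M" "dy \<le> M" "Suc cx \<le> M" "Suc cy \<le> M" "Suc dx \<le> M" "Suc dy \<le> M"
    using b by auto
  show ?thesis unfolding c d sides_def sqr_def gadj_def
    using bb by (simp add: doubleton_eq_iff inj) (auto)
qed

lemma adj_sqr:
  assumes "c \<in> grid M" "d \<in> grid M"
  shows "adj (sqr QQ M c) (sqr QQ M d) \<longleftrightarrow> gadj c d"
  unfolding adj_def using sides_sqr[OF assms] sqr_inj[OF assms] gadj_irrefl by blast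

end


lemma alph_eq1: "y \<le> x \<Longrightarrow> alph M x y = ((real M - real x)/real M, (real x - real y)/real M, real y/real M, 0)"
  by (simp add: alph_def max_def min_def)
lemma alph_eq2: "x \<le> y \<Longrightarrow> alph M x y = ((real M - real y)/real M, 0, real x/real M, (real y - real x)/real M)"
  by (simp add: alph_def max_def min_def)

context
  fixes Q1 Q2 Q3 Q4 :: pt
  assumes cv: "convex_quad_ccw (Q1,Q2,Q3,Q4)"
begin

lemma Sq_sqr:
  assumes k: "(k1,k2,k3,k4) \<in> Aidx M" and M: "0 < M"
  shows "Sq (Q1,Q2,Q3,Q4) M (k1,k2,k3,k4) = sqr (Q1,Q2,Q3,Q4) M (k2+k3, k3+k4)"
proof -
  have Mr: "real M \<noteq> 0" using M by simp
  consider (a1) "(k1,k2,k3,k4) \<in> A1 M" | (a2) "(k1,k2,k3,k4) \<notin> A1 M" "(k1,k2,k3,k4) \<in> A2 M"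
    | (a3) "(k1,k2,k3,k4) \<notin> A1 M" "(k1,k2,k3,k4) \<notin> A2 M" "(k1,k2,k3,k4) \<in> A3 M"
    using k unfolding Aidx_def by blast
  then show ?thesis
  proof cases
    case a1
    then have h: "k4 = 0" "k1+k2+k3 = M-1" "k2 \<noteq> 0" by (auto simp: A1_def)
    then have rM: "real M = real k1 + real k2 + real k3 + 1" using M by linarith
    have "Sq (Q1,Q2,Q3,Q4) M (k1,k2,k3,k4) =
       (comb (Q1,Q2,Q3,Q4) ((real k1+1)/real M, real k2/real M, real k3/real M, 0),
        comb (Q1,Q2,Q3,Q4) (real k1/real M, (real k2+1)/real M, real k3/real M, 0),
        comb (Q1,Q2,Q3,Q4) (real k1/real M, real k2/real M, (real k3+1)/real M, 0),
        comb (Q1,Q2,Q3,Q4) ((real k1+1)/real M, (real k2-1)/real M, (real k3+1)/real M, 0))"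
      using a1 by (simp add: Sq_def Let_def)
    also have "\<dots> = sqr (Q1,Q2,Q3,Q4) M (k2+k3, k3+k4)"
      unfolding sqr_def ptg_def using h
      by (simp add: alph_eq1 rM field_simps)
    finally show ?thesis .
  next
    case a2
    then have h: "k2 = 0" "k1+k3+k4 = M-1" "k4 \<noteq> 0" by (auto simp: A2_def)
    then have rM: "real M = real k1 + real k3 + real k4 + 1" using M by linarith
    have "Sq (Q1,Q2,Q3,Q4) M (k1,k2,k3,k4) =
       (comb (Q1,Q2,Q3,Q4) ((real k1+1)/real M, 0, real k3/real M, real k4/real M),
        comb (Q1,Q2,Q3,Q4) ((real k1+1)/real M, 0, (real k3+1)/real M, (real k4-1)/real M),
        comb (Q1,Q2,Q3,Q4) (real k1/real M, 0, (real k3+1)/real M, real k4/real M),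
        comb (Q1,Q2,Q3,Q4) (real k1/real M, 0, real k3/real M, (real k4+1)/real M))"
      using a2 by (simp add: Sq_def Let_def)
    also have "\<dots> = sqr (Q1,Q2,Q3,Q4) M (k2+k3, k3+k4)"
      unfolding sqr_def ptg_def using h
      by (simp add: alph_eq2 rM field_simps)
    finally show ?thesis .
  next
    case a3
    then have h: "k2 = 0" "k4 = 0" "k1+k3 = M-1" by (auto simp: A3_def)
    then have rM: "real M = real k1 + real k3 + 1" using M by linarith
    have "Sq (Q1,Q2,Q3,Q4) M (k1,k2,k3,k4) =
       (comb (Q1,Q2,Q3,Q4) ((real k1+1)/real M, 0, real k3/real M, 0),
        comb (Q1,Q2,Q3,Q4) (real k1/real M, 1/real M, real k3/real M, 0),
        comb (Q1,Q2,Q3,Q4) (real k1/real M, 0, (real k3+1)/real M, 0),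
        comb (Q1,Q2,Q3,Q4) (real k1/real M, 0, real k3/real M, 1/real M))"
      using a3 by (simp add: Sq_def Let_def)
    also have "\<dots> = sqr (Q1,Q2,Q3,Q4) M (k2+k3, k3+k4)"
      unfolding sqr_def ptg_def using h
      by (simp add: alph_eq1 alph_eq2 rM field_simps)
    finally show ?thesis .
  qed
qed

end


definition gk :: "idx \<Rightarrow> cell" where "gk k = (case k of (k1,k2,k3,k4) \<Rightarrow> (k2+k3, k3+k4))"

lemma Aidx_grid: "0 < M \<Longrightarrow> gk ` Aidx M = grid M"
proof
  assume M: "0 < M"
  show "gk ` Aidx M \<subseteq> grid M"
    using M by (auto simp: gk_def Aidx_def A1_def A2_def A3_def grid_def)
  show "grid M \<subseteq> gk ` Aidx M"
  proof
    fix c assume "c \<in> grid M"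
    then obtain x y where c: "c = (x,y)" "x < M" "y < M" by (auto simp: grid_def)
    consider "y < x" | "x < y" | "x = y" by linarith
    then show "c \<in> gk ` Aidx M"
    proof cases
      case 1
      then have "(M-1-x, x-y, y, 0) \<in> Aidx M" "gk (M-1-x, x-y, y, 0) = c"
        using c by (auto simp: gk_def Aidx_def A1_def)
      then show ?thesis by force
    next
      case 2
      then have "(M-1-y, 0, x, y-x) \<in> Aidx M" "gk (M-1-y, 0, x, y-x) = c"
        using c by (auto simp: gk_def Aidx_def A2_def)
      then show ?thesis by force
    next
      case 3
      then have "(M-1-x, 0, x, 0) \<in> Aidx M" "gk (M-1-x, 0, x, 0) = c"
        using c by (auto simp: gk_def Aidx_def A3_def)
      then show ?thesis by force
    qed
  qed
qed

lemma ex1_pair: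
  "(\<exists>!p. case p of (a,b) \<Rightarrow> a + b = (N::nat) \<and> R b) \<longleftrightarrow> (\<exists>!x. x \<le> N \<and> R x)"
proof
  assume h: "\<exists>!p. case p of (a,b) \<Rightarrow> a + b = N \<and> R b"
  obtain p0 where p0: "case p0 of (a,b) \<Rightarrow> a + b = N \<and> R b"
    and u: "\<forall>p. (case p of (a,b) \<Rightarrow> a + b = N \<and> R b) \<longrightarrow> p = p0"
    by (rule ex1E[OF h]) blast
  obtain a b where ab: "p0 = (a,b)" by (cases p0)
  show "\<exists>!x. x \<le> N \<and> R x"
  proof (rule ex1I[of _ b])
    show "b \<le> N \<and> R b" using p0 ab by auto
    fix x assume x: "x \<le> N \<and> R x"
    have "case (N-x,x) of (a,b) \<Rightarrow> a + b = N \<and> R b" using x by simp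
    then have "(N - x, x) = p0" using u by blast
    then show "x = b" using ab by simp
  qed
next
  assume h: "\<exists>!x. x \<le> N \<and> R x"
  obtain b where b: "b \<le> N \<and> R b" and u: "\<forall>x. x \<le> N \<and> R x \<longrightarrow> x = b"
    by (rule ex1E[OF h]) blast
  show "\<exists>!p. case p of (a,b) \<Rightarrow> a + b = N \<and> R b"
  proof (rule ex1I[of _ "(N-b,b)"])
    show "case (N-b,b) of (a,b) \<Rightarrow> a + b = N \<and> R b" using b by auto
    fix p assume p: "case p of (a,b) \<Rightarrow> a + b = N \<and> R b"
    obtain a' b' where ab: "p = (a',b')" by (cases p)
    have "a' + b' = N" "R b'" using p ab by auto
    then have "b' = b" using u by auto
    then show "p = (N-b,b)" using ab \<open>a' + b' = N\<close> by auto
  qed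
qed

context
  fixes Q1 Q2 Q3 Q4 :: pt
  assumes cv: "convex_quad_ccw (Q1,Q2,Q3,Q4)"
begin

lemma Sq_sqr': "k \<in> Aidx M \<Longrightarrow> 0 < M \<Longrightarrow> Sq (Q1,Q2,Q3,Q4) M k = sqr (Q1,Q2,Q3,Q4) M (gk k)"
  using Sq_sqr[OF cv] by (cases k) (auto simp: gk_def)

lemma Sset_sqr: "0 < M \<Longrightarrow> Sset (Q1,Q2,Q3,Q4) M = sqr (Q1,Q2,Q3,Q4) M ` grid M"
proof -
  assume M: "0 < M"
  have "Sset (Q1,Q2,Q3,Q4) M = (\<lambda>k. sqr (Q1,Q2,Q3,Q4) M (gk k)) ` Aidx M"
    unfolding Sset_def using Sq_sqr'[OF _ M] by (intro image_cong) auto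
  also have "\<dots> = sqr (Q1,Q2,Q3,Q4) M ` (gk ` Aidx M)" by (simp add: image_image)
  finally show ?thesis using Aidx_grid[OF M] by simp
qed

lemma mem_sqr:
  assumes "C \<subseteq> grid M" "p \<in> grid M"
  shows "sqr (Q1,Q2,Q3,Q4) M p \<in> sqr (Q1,Q2,Q3,Q4) M ` C \<longleftrightarrow> p \<in> C"
proof
  assume "sqr (Q1,Q2,Q3,Q4) M p \<in> sqr (Q1,Q2,Q3,Q4) M ` C"
  then obtain q where q: "q \<in> C" "sqr (Q1,Q2,Q3,Q4) M p = sqr (Q1,Q2,Q3,Q4) M q" by blast
  then have "q \<in> grid M" using assms(1) by blast
  then have "p = q" using q(2) sqr_inj[OF cv assms(2)] by blast
  then show "p \<in> C" using q(1) by simp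
qed simp

lemma exit_corner:
  assumes C: "C \<subseteq> grid M" and M: "2 \<le> M"
  shows "exit_property (Q1,Q2,Q3,Q4) M (sqr (Q1,Q2,Q3,Q4) M ` C) \<longleftrightarrow>
           (\<exists>!x. x < M \<and> (x,0) \<in> C \<and> (x,M-1) \<in> C) \<and> (\<exists>!y. y < M \<and> (0,y) \<in> C \<and> (M-1,y) \<in> C)"
    and "corner_property (Q1,Q2,Q3,Q4) M (sqr (Q1,Q2,Q3,Q4) M ` C) \<longleftrightarrow>
           \<not> ((0,0) \<in> C \<and> (M-1,M-1) \<in> C) \<and> \<not> ((M-1,0) \<in> C \<and> (0,M-1) \<in> C)"
proof -
  let ?W = "sqr (Q1,Q2,Q3,Q4) M ` C"
  let ?S = "Sq (Q1,Q2,Q3,Q4) M"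
  have M0: "0 < M" using M by simp
  have P1: "\<And>k1 k2. ((k1,k2,0,0) \<in> Aidx M \<and> ?S (k1,k2,0,0) \<in> ?W \<and> ?S (0,0,k2,k1) \<in> ?W) \<longleftrightarrow>
      (k1 + k2 = M - 1 \<and> (k2 < M \<and> (k2,0) \<in> C \<and> (k2,M-1) \<in> C))"
  proof -
    fix k1 k2
    show "?thesis k1 k2"
    proof (cases "k1 + k2 = M - 1")
      case True
      have a: "(k1,k2,0,0) \<in> Aidx M" "(0,0,k2,k1) \<in> Aidx M" using True
        by (auto simp: Aidx_def A1_def A2_def A3_def)
      have g: "(k2,0) \<in> grid M" "(k2,M-1) \<in> grid M" using True M by (auto simp: grid_def)
      have "?S (k1,k2,0,0) = sqr (Q1,Q2,Q3,Q4) M (k2,0)" "?S (0,0,k2,k1) = sqr (Q1,Q2,Q3,Q4) M (k2,M-1)"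
        using Sq_sqr'[OF a(1) M0] Sq_sqr'[OF a(2) M0] True by (auto simp: gk_def add.commute)
      then show ?thesis using a g mem_sqr[OF C] True M by auto
    next
      case False
      then have "(k1,k2,0,0) \<notin> Aidx M" by (auto simp: Aidx_def A1_def A2_def A3_def)
      then show ?thesis using False by simp
    qed
  qed
  have P2: "\<And>k1 k4. ((k1,0,0,k4) \<in> Aidx M \<and> ?S (k1,0,0,k4) \<in> ?W \<and> ?S (0,k1,k4,0) \<in> ?W) \<longleftrightarrow>
      (k1 + k4 = M - 1 \<and> (k4 < M \<and> (0,k4) \<in> C \<and> (M-1,k4) \<in> C))"
  proof -
    fix k1 k4
    show "?thesis k1 k4"
    proof (cases "k1 + k4 = M - 1")
      case True
      have a: "(k1,0,0,k4) \<in> Aidx M" "(0,k1,k4,0) \<in> Aidx M" using True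
        by (auto simp: Aidx_def A1_def A2_def A3_def)
      have g: "(0,k4) \<in> grid M" "(M-1,k4) \<in> grid M" using True M by (auto simp: grid_def)
      have "?S (k1,0,0,k4) = sqr (Q1,Q2,Q3,Q4) M (0,k4)" "?S (0,k1,k4,0) = sqr (Q1,Q2,Q3,Q4) M (M-1,k4)"
        using Sq_sqr'[OF a(1) M0] Sq_sqr'[OF a(2) M0] True by (auto simp: gk_def)
      then show ?thesis using a g mem_sqr[OF C] True M by auto
    next
      case False
      then have "(k1,0,0,k4) \<notin> Aidx M" by (auto simp: Aidx_def A1_def A2_def A3_def)
      then show ?thesis using False by simp
    qed
  qed
  have e1: "(\<exists>!p. case p of (k1, k2) \<Rightarrow> (k1,k2,0,0) \<in> Aidx M \<and> ?S (k1,k2,0,0) \<in> ?W \<and> ?S (0,0,k2,k1) \<in> ?W)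
     \<longleftrightarrow> (\<exists>!x. x < M \<and> (x,0) \<in> C \<and> (x,M-1) \<in> C)"
  proof -
    have "(\<exists>!p. case p of (k1, k2) \<Rightarrow> (k1,k2,0,0) \<in> Aidx M \<and> ?S (k1,k2,0,0) \<in> ?W \<and> ?S (0,0,k2,k1) \<in> ?W)
       \<longleftrightarrow> (\<exists>!p. case p of (k1, k2) \<Rightarrow> k1 + k2 = M - 1 \<and> (k2 < M \<and> (k2,0) \<in> C \<and> (k2,M-1) \<in> C))"
    proof -
      have "\<And>p. (case p of (k1, k2) \<Rightarrow> (k1,k2,0,0) \<in> Aidx M \<and> ?S (k1,k2,0,0) \<in> ?W \<and> ?S (0,0,k2,k1) \<in> ?W)
          = (case p of (k1, k2) \<Rightarrow> k1 + k2 = M - 1 \<and> (k2 < M \<and> (k2,0) \<in> C \<and> (k2,M-1) \<in> C))"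
      proof -
        fix p :: "nat \<times> nat"
        obtain k1 k2 where "p = (k1,k2)" by (cases p)
        then show "?thesis p" using P1[of k1 k2] by (simp only: prod.case)
      qed
      then show ?thesis by (simp only:)
    qed
    also have "\<dots> \<longleftrightarrow> (\<exists>!x. x \<le> M - 1 \<and> (x < M \<and> (x,0) \<in> C \<and> (x,M-1) \<in> C))" by (rule ex1_pair)
    also have "\<dots> \<longleftrightarrow> (\<exists>!x. x < M \<and> (x,0) \<in> C \<and> (x,M-1) \<in> C)"
      by (rule arg_cong[of _ _ Ex1]) (rule ext, use M in auto)
    finally show ?thesis .
  qed
  have e2: "(\<exists>!p. case p of (k1, k4) \<Rightarrow> (k1,0,0,k4) \<in> Aidx M \<and> ?S (k1,0,0,k4) \<in> ?W \<and> ?S (0,k1,k4,0) \<in> ?W)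
     \<longleftrightarrow> (\<exists>!y. y < M \<and> (0,y) \<in> C \<and> (M-1,y) \<in> C)"
  proof -
    have "(\<exists>!p. case p of (k1, k4) \<Rightarrow> (k1,0,0,k4) \<in> Aidx M \<and> ?S (k1,0,0,k4) \<in> ?W \<and> ?S (0,k1,k4,0) \<in> ?W)
       \<longleftrightarrow> (\<exists>!p. case p of (k1, k4) \<Rightarrow> k1 + k4 = M - 1 \<and> (k4 < M \<and> (0,k4) \<in> C \<and> (M-1,k4) \<in> C))"
    proof -
      have "\<And>p. (case p of (k1, k4) \<Rightarrow> (k1,0,0,k4) \<in> Aidx M \<and> ?S (k1,0,0,k4) \<in> ?W \<and> ?S (0,k1,k4,0) \<in> ?W)
          = (case p of (k1, k4) \<Rightarrow> k1 + k4 = M - 1 \<and> (k4 < M \<and> (0,k4) \<in> C \<and> (M-1,k4) \<in> C))"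
      proof -
        fix p :: "nat \<times> nat"
        obtain k1 k4 where "p = (k1,k4)" by (cases p)
        then show "?thesis p" using P2[of k1 k4] by (simp only: prod.case)
      qed
      then show ?thesis by (simp only:)
    qed
    also have "\<dots> \<longleftrightarrow> (\<exists>!x. x \<le> M - 1 \<and> (x < M \<and> (0,x) \<in> C \<and> (M-1,x) \<in> C))" by (rule ex1_pair)
    also have "\<dots> \<longleftrightarrow> (\<exists>!y. y < M \<and> (0,y) \<in> C \<and> (M-1,y) \<in> C)"
      by (rule arg_cong[of _ _ Ex1]) (rule ext, use M in auto)
    finally show ?thesis .
  qed
  show "exit_property (Q1,Q2,Q3,Q4) M ?W \<longleftrightarrow>
           (\<exists>!x. x < M \<and> (x,0) \<in> C \<and> (x,M-1) \<in> C) \<and> (\<exists>!y. y < M \<and> (0,y) \<in> C \<and> (M-1,y) \<in> C)"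
    unfolding exit_property_def by (simp only: e1 e2)
  have a: "(M-1,0,0,0) \<in> Aidx M" "(0,0,M-1,0) \<in> Aidx M" "(0,M-1,0,0) \<in> Aidx M" "(0,0,0,M-1) \<in> Aidx M"
    using M by (auto simp: Aidx_def A1_def A2_def A3_def)
  have s: "?S (M-1,0,0,0) = sqr (Q1,Q2,Q3,Q4) M (0,0)" "?S (0,0,M-1,0) = sqr (Q1,Q2,Q3,Q4) M (M-1,M-1)"
    "?S (0,M-1,0,0) = sqr (Q1,Q2,Q3,Q4) M (M-1,0)" "?S (0,0,0,M-1) = sqr (Q1,Q2,Q3,Q4) M (0,M-1)"
    using Sq_sqr'[OF a(1) M0] Sq_sqr'[OF a(2) M0] Sq_sqr'[OF a(3) M0] Sq_sqr'[OF a(4) M0] by (auto simp: gk_def)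
  have g: "(0,0) \<in> grid M" "(M-1,M-1) \<in> grid M" "(M-1,0) \<in> grid M" "(0,M-1) \<in> grid M"
    using M by (auto simp: grid_def)
  show "corner_property (Q1,Q2,Q3,Q4) M ?W \<longleftrightarrow>
           \<not> ((0,0) \<in> C \<and> (M-1,M-1) \<in> C) \<and> \<not> ((M-1,0) \<in> C \<and> (0,M-1) \<in> C)"
    unfolding corner_property_def s using mem_sqr[OF C g(1)] mem_sqr[OF C g(2)] mem_sqr[OF C g(3)] mem_sqr[OF C g(4)]
    by simp
qed

end


lemma rt_fwd:
  assumes eq: "\<And>x y. x \<in> V \<Longrightarrow> y \<in> V \<Longrightarrow> A (f x) (f y) \<longleftrightarrow> R x y"
    and "(x,y) \<in> {(a,b). a \<in> V \<and> b \<in> V \<and> R a b}\<^sup>*"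
  shows "(f x, f y) \<in> {(a,b). a \<in> f ` V \<and> b \<in> f ` V \<and> A a b}\<^sup>*"
  using assms(2)
proof (induction rule: rtrancl_induct)
  case (step y z)
  then have "(f y, f z) \<in> {(a,b). a \<in> f ` V \<and> b \<in> f ` V \<and> A a b}" using eq by auto
  then show ?case using step(3) by (meson rtrancl_into_rtrancl)
qed simp

lemma rt_bwd:
  assumes inj: "inj_on f V" and eq: "\<And>x y. x \<in> V \<Longrightarrow> y \<in> V \<Longrightarrow> A (f x) (f y) \<longleftrightarrow> R x y"
    and "(X,Y) \<in> {(a,b). a \<in> f ` V \<and> b \<in> f ` V \<and> A a b}\<^sup>*" and x: "x \<in> V" "X = f x"
  shows "\<forall>y\<in>V. Y = f y \<longrightarrow> (x,y) \<in> {(a,b). a \<in> V \<and> b \<in> V \<and> R a b}\<^sup>*"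
  using assms(3)
proof (induction rule: rtrancl_induct)
  case base
  show ?case using inj x by (auto dest: inj_onD)
next
  case (step Y' Z)
  then obtain y' where y': "y' \<in> V" "Y' = f y'" by blast
  have IH: "(x,y') \<in> {(a,b). a \<in> V \<and> b \<in> V \<and> R a b}\<^sup>*" using step(3) y' by blast
  show ?case
  proof (intro ballI impI)
    fix y assume y: "y \<in> V" "Z = f y"
    have "A (f y') (f y)" using step(2) y y' by auto
    then have "R y' y" using eq y y' by blast
    then have "(y',y) \<in> {(a,b). a \<in> V \<and> b \<in> V \<and> R a b}" using y y' by auto
    then show "(x,y) \<in> {(a,b). a \<in> V \<and> b \<in> V \<and> R a b}\<^sup>*" using IH by (meson rtrancl_into_rtrancl)
  qed
qed

lemma conn_transfer:
  assumes inj: "inj_on f V" and eq: "\<And>x y. x \<in> V \<Longrightarrow> y \<in> V \<Longrightarrow> A (f x) (f y) \<longleftrightarrow> R x y"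
  shows "conn A (f ` V) \<longleftrightarrow> conn R V"
proof
  assume h: "conn A (f ` V)"
  show "conn R V" unfolding conn_def
  proof (intro ballI)
    fix u v assume uv: "u \<in> V" "v \<in> V"
    then have "(f u, f v) \<in> {(a,b). a \<in> f ` V \<and> b \<in> f ` V \<and> A a b}\<^sup>*" using h unfolding conn_def by blast
    then show "(u, v) \<in> {(a,b). a \<in> V \<and> b \<in> V \<and> R a b}\<^sup>*" using rt_bwd[where f=f and V=V and A=A and R=R, OF inj eq] uv by blast
  qed
next
  assume h: "conn R V"
  show "conn A (f ` V)" unfolding conn_def
  proof (intro ballI)
    fix U W assume "U \<in> f ` V" "W \<in> f ` V"
    then obtain u w where "u \<in> V" "w \<in> V" "U = f u" "W = f w" by blast
    then show "(U, W) \<in> {(a,b). a \<in> f ` V \<and> b \<in> f ` V \<and> A a b}\<^sup>*"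
      using h rt_fwd[where f=f and V=V and A=A and R=R, OF eq] unfolding conn_def by blast
  qed
qed

lemma cyc_transfer:
  assumes inj: "inj_on f V" and eq: "\<And>x y. x \<in> V \<Longrightarrow> y \<in> V \<Longrightarrow> A (f x) (f y) \<longleftrightarrow> R x y"
  shows "cyc A (f ` V) \<longleftrightarrow> cyc R V"
proof
  assume "cyc A (f ` V)"
  then obtain cs where cs: "3 \<le> length cs" "distinct cs" "set cs \<subseteq> f ` V" "successively A cs" "A (last cs) (hd cs)"
    unfolding cyc_def by blast
  define cs0 where "cs0 = map (inv_into V f) cs"
  have m: "map f cs0 = cs" unfolding cs0_def using cs(3)
    by (simp add: map_idI f_inv_into_f subset_iff)
  have s0: "set cs0 \<subseteq> V" unfolding cs0_def using cs(3) by (auto intro: inv_into_into)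
  have ne: "cs0 \<noteq> []" using cs(1) m by auto
  show "cyc R V" unfolding cyc_def
  proof (intro exI[of _ cs0] conjI)
    show "3 \<le> length cs0" using cs(1) unfolding cs0_def by simp
    show "distinct cs0" using cs(2) m by (metis distinct_map)
    show "set cs0 \<subseteq> V" by (rule s0)
    have "successively (\<lambda>x y. A (f x) (f y)) cs0" using cs(4) m by (metis successively_map)
    then show "successively R cs0"
      by (rule successively_mono) (use eq s0 in blast)
    have "A (f (last cs0)) (f (hd cs0))" using cs(5) m ne by (metis last_map hd_map)
    then show "R (last cs0) (hd cs0)" using eq s0 ne by (meson last_in_set hd_in_set subsetD)
  qed
next
  assume "cyc R V"
  then obtain cs where cs: "3 \<le> length cs" "distinct cs" "set cs \<subseteq> V" "successively R cs" "R (last cs) (hd cs)"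
    unfolding cyc_def by blast
  have ne: "cs \<noteq> []" using cs(1) by auto
  show "cyc A (f ` V)" unfolding cyc_def
  proof (intro exI[of _ "map f cs"] conjI)
    show "3 \<le> length (map f cs)" using cs(1) by simp
    show "distinct (map f cs)" using cs(2,3) inj by (simp add: distinct_map inj_on_subset)
    show "set (map f cs) \<subseteq> f ` V" using cs(3) by auto
    have "successively (\<lambda>x y. A (f x) (f y)) cs"
      by (rule successively_mono[OF cs(4)]) (use eq cs(3) in blast)
    then show "successively A (map f cs)" by (simp add: successively_map)
    have "A (f (last cs)) (f (hd cs))" using cs(5) eq cs(3) ne by (meson last_in_set hd_in_set subsetD)
    then show "A (last (map f cs)) (hd (map f cs))" using ne by (simp add: last_map hd_map)
  qed
qed

lemma has_cycle_cyc: "has_cycle W \<longleftrightarrow> cyc adj W"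
proof -
  have "\<And>cs. (\<forall>i < length cs - 1. adj (cs ! i) (cs ! Suc i)) \<longleftrightarrow> successively adj cs"
    by (auto simp: successively_conv_nth)
  then show ?thesis unfolding has_cycle_def cyc_def by simp
qed

lemma gc_conn: "graph_connected W \<longleftrightarrow> conn adj W"
  unfolding graph_connected_def conn_def by simp


primrec Cs :: "nat \<Rightarrow> cell set \<Rightarrow> nat \<Rightarrow> cell set" where
  "Cs m C 0 = C"
| "Cs m C (Suc j) = subst m (Cs m C j) C"

context
  fixes Q1 Q2 Q3 Q4 :: pt
  assumes cv: "convex_quad_ccw (Q1,Q2,Q3,Q4)"
begin

lemma lab_iff:
  assumes C: "C \<subseteq> grid M" and M: "4 \<le> M"
  shows "labyrinth_set (Q1,Q2,Q3,Q4) M (sqr (Q1,Q2,Q3,Q4) M ` C) \<longleftrightarrow> clab M C"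
proof -
  let ?f = "sqr (Q1,Q2,Q3,Q4) M"
  have M0: "0 < M" using M by simp
  have inj: "inj_on ?f C" using sqr_inj[OF cv] C by (meson inj_onI subsetD)
  have eq: "\<And>x y. x \<in> C \<Longrightarrow> y \<in> C \<Longrightarrow> adj (?f x) (?f y) \<longleftrightarrow> gadj x y"
    using adj_sqr[OF cv] C by blast
  have sub: "?f ` C \<subseteq> Sset (Q1,Q2,Q3,Q4) M" using Sset_sqr[OF cv M0] C by auto
  have tree: "is_tree (?f ` C) \<longleftrightarrow> ctree C"
    unfolding is_tree_def ctree_def gc_conn has_cycle_cyc
    by (simp only: finite_image_iff[OF inj] conn_transfer[where f="?f" and V=C and A=adj and R=gadj, OF inj eq] cyc_transfer[where f="?f" and V=C and A=adj and R=gadj, OF inj eq] image_is_empty)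
  have M2: "2 \<le> M" using M by simp
  have "labyrinth_set (Q1,Q2,Q3,Q4) M (sqr (Q1,Q2,Q3,Q4) M ` C) \<longleftrightarrow>
     4 \<le> M \<and> ?f ` C \<subseteq> Sset (Q1,Q2,Q3,Q4) M \<and> ctree C \<and>
     ((\<exists>!x. x < M \<and> (x,0) \<in> C \<and> (x,M-1) \<in> C) \<and> (\<exists>!y. y < M \<and> (0,y) \<in> C \<and> (M-1,y) \<in> C)) \<and>
     (\<not> ((0,0) \<in> C \<and> (M-1,M-1) \<in> C) \<and> \<not> ((M-1,0) \<in> C \<and> (0,M-1) \<in> C))"
    unfolding labyrinth_set_def by (simp only: tree exit_corner[OF cv C M2])
  also have "\<dots> \<longleftrightarrow> clab M C"
    unfolding clab_def using M sub C by blast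
  finally show ?thesis .
qed

lemma main_ind:
  assumes C: "clab m C" and W1: "W1 = sqr (Q1,Q2,Q3,Q4) m ` C"
  shows "clab (m ^ Suc j) (Cs m C j) \<and> white_aux (Q1,Q2,Q3,Q4) W1 j = sqr (Q1,Q2,Q3,Q4) (m ^ Suc j) ` Cs m C j"
proof (induction j)
  case 0
  then show ?case using C W1 by simp
next
  case (Suc j)
  let ?M = "m ^ Suc j"
  let ?D = "Cs m C j"
  have D: "clab ?M ?D" using Suc by blast
  have cl: "clab (?M * m) (subst m ?D C)" using clab_subst[OF C D] .
  have pw: "m ^ Suc (Suc j) = ?M * m" by (simp only: power_Suc2)
  have Dg: "?D \<subseteq> grid ?M" and Cg: "C \<subseteq> grid m" using C D by (auto simp: clab_def)
  have "white_aux (Q1,Q2,Q3,Q4) W1 (Suc j) =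
     {quad_map (Q1,Q2,Q3,Q4) W W' | W W'. W' \<in> W1 \<and> W \<in> sqr (Q1,Q2,Q3,Q4) ?M ` ?D}"
    using Suc by simp
  also have "\<dots> = sqr (Q1,Q2,Q3,Q4) (?M * m) ` subst m ?D C"
  proof
    show "{quad_map (Q1,Q2,Q3,Q4) W W' | W W'. W' \<in> W1 \<and> W \<in> sqr (Q1,Q2,Q3,Q4) ?M ` ?D}
          \<subseteq> sqr (Q1,Q2,Q3,Q4) (?M * m) ` subst m ?D C"
    proof
      fix X assume "X \<in> {quad_map (Q1,Q2,Q3,Q4) W W' | W W'. W' \<in> W1 \<and> W \<in> sqr (Q1,Q2,Q3,Q4) ?M ` ?D}"
      then obtain W W' where WW: "X = quad_map (Q1,Q2,Q3,Q4) W W'" "W' \<in> W1" "W \<in> sqr (Q1,Q2,Q3,Q4) ?M ` ?D"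
        by blast
      then obtain d c where dc: "d \<in> ?D" "c \<in> C" "W = sqr (Q1,Q2,Q3,Q4) ?M d" "W' = sqr (Q1,Q2,Q3,Q4) m c"
        using W1 by blast
      have g: "d \<in> grid ?M" "c \<in> grid m" using dc Dg Cg by auto
      have "X = sqr (Q1,Q2,Q3,Q4) (?M * m) (emb m d c)"
        using quad_map_sqr[OF cv g] WW(1) dc(3,4) by simp
      moreover have "emb m d c \<in> subst m ?D C" using dc unfolding subst_def by blast
      ultimately show "X \<in> sqr (Q1,Q2,Q3,Q4) (?M * m) ` subst m ?D C" by blast
    qed
  next
    show "sqr (Q1,Q2,Q3,Q4) (?M * m) ` subst m ?D C \<subseteq>
          {quad_map (Q1,Q2,Q3,Q4) W W' | W W'. W' \<in> W1 \<and> W \<in> sqr (Q1,Q2,Q3,Q4) ?M ` ?D}"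
    proof
      fix X assume "X \<in> sqr (Q1,Q2,Q3,Q4) (?M * m) ` subst m ?D C"
      then obtain d c where dc: "d \<in> ?D" "c \<in> C" "X = sqr (Q1,Q2,Q3,Q4) (?M * m) (emb m d c)"
        unfolding subst_def by blast
      have g: "d \<in> grid ?M" "c \<in> grid m" using dc Dg Cg by auto
      have "X = quad_map (Q1,Q2,Q3,Q4) (sqr (Q1,Q2,Q3,Q4) ?M d) (sqr (Q1,Q2,Q3,Q4) m c)"
        using quad_map_sqr[OF cv g] dc(3) by simp
      moreover have "sqr (Q1,Q2,Q3,Q4) m c \<in> W1" "sqr (Q1,Q2,Q3,Q4) ?M d \<in> sqr (Q1,Q2,Q3,Q4) ?M ` ?D"
        using dc W1 by auto
      ultimately show "X \<in> {quad_map (Q1,Q2,Q3,Q4) W W' | W W'. W' \<in> W1 \<and> W \<in> sqr (Q1,Q2,Q3,Q4) ?M ` ?D}"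
        by blast
    qed
  qed
  finally have wa: "white_aux (Q1,Q2,Q3,Q4) W1 (Suc j) = sqr (Q1,Q2,Q3,Q4) (?M * m) ` subst m ?D C" .
  show ?case unfolding pw Cs.simps using cl wa by blast
qed

end

theorem proposition3p2:
  fixes Q1 Q2 Q3 Q4 :: "real^2" and m n :: nat and W1 :: "quad set"
  assumes "convex_quad_ccw (Q1,Q2,Q3,Q4)"
    and "dist Q1 Q3 \<le> dist Q2 Q4"
    and "m \<ge> 4"
    and "labyrinth_set (Q1,Q2,Q3,Q4) m W1"
    and "n \<ge> 1"
  shows "labyrinth_set (Q1,Q2,Q3,Q4) (m ^ n) (white (Q1,Q2,Q3,Q4) W1 n)"
proof -
  note cv = assms(1)
  have m0: "0 < m" using assms(3) by simp
  have W1s: "W1 \<subseteq> sqr (Q1,Q2,Q3,Q4) m ` grid m"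
    using assms(4) Sset_sqr[OF cv m0] by (simp add: labyrinth_set_def)
  define C where "C = {c \<in> grid m. sqr (Q1,Q2,Q3,Q4) m c \<in> W1}"
  have Cg: "C \<subseteq> grid m" unfolding C_def by blast
  have W1C: "W1 = sqr (Q1,Q2,Q3,Q4) m ` C" unfolding C_def using W1s by blast
  have clC: "clab m C" using assms(4) lab_iff[OF cv Cg assms(3)] W1C by simp
  obtain j where j: "n = Suc j" using assms(5) by (cases n) auto
  have mi: "clab (m ^ Suc j) (Cs m C j) \<and> white_aux (Q1,Q2,Q3,Q4) W1 j = sqr (Q1,Q2,Q3,Q4) (m ^ Suc j) ` Cs m C j"
    using main_ind[OF cv clC W1C] .
  have g: "Cs m C j \<subseteq> grid (m ^ Suc j)" "4 \<le> m ^ Suc j" using mi by (auto simp: clab_def)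
  have "white (Q1,Q2,Q3,Q4) W1 n = sqr (Q1,Q2,Q3,Q4) (m ^ Suc j) ` Cs m C j"
    unfolding white_def j using mi by simp
  then show ?thesis unfolding j using lab_iff[OF cv g] mi by simp
qed


end
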